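(* For every integer $g\geqslant0$, the $\mathbb{Z}/4$-graded Poincaré polynomial of $\mathbb{C}[\alpha,\gamma]/J_g^-$ is \[P_t(J_g^-)=\tfrac12\lfloor g/2\rfloor\big(\lfloor g/2\rfloor+1\big)\,(1+t^2).\]
   Context: $\zeta_k^-\in\mathbb{C}[\alpha,\gamma]$: $\zeta^-_i=0$ for $i<0$, $\zeta^-_0=1$, $\zeta^-_{k+1}=\alpha\zeta^-_k-16k^2\zeta^-_{k-1}+2k(k-1)\gamma\zeta^-_{k-2}$ for $k$ odd and $\zeta^-_{k+1}=\alpha\zeta^-_k+2k(k-1)\gamma\zeta^-_{k-2}$ for $k$ even ($k\geqslant0$); $J^-_k=(\zeta^-_k,\zeta^-_{k+1},\zeta^-_{k+2})$. $\mathbb{C}[\alpha,\gamma]$ is $\mathbb{Z}/4$-graded with $\alpha,\gamma$ of degree $2$; $J_g^-$ is homogeneous. For a $\mathbb{Z}/4$-graded space $V$, $P_t(V)=\sum_{i=0}^3\dim V_i\,t^i\in\mathbb{Z}[t]/(t^4-1)$, and $P_t(J)$ means $P_t(\mathbb{C}[\alpha,\gamma]/J)$. *)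

theory Defs
  imports Complex_Main "HOL-Computational_Algebra.Polynomial"
begin

text \<open>The polynomial ring C[alpha,gamma] is represented as complex poly poly:
  the outer variable is gamma, the inner (coefficient) variable is alpha.
  The coefficient of alpha^i gamma^j in p is coeff (coeff p j) i.\<close>

type_synonym cpoly2 = "complex poly poly"

definition alpha :: cpoly2 where "alpha = [:[:0, 1:]:]"
definition gamma :: cpoly2 where "gamma = [:0, 1:]"

definition cconst :: "complex \<Rightarrow> cpoly2" where "cconst c = [:[:c:]:]"

fun zeta :: "nat \<Rightarrow> cpoly2" where
  "zeta 0 = 1"
| "zeta (Suc k) = alpha * zeta k
     + (if odd k then - (of_nat (16 * k^2)) * zeta (k - 1) else 0)
     + (if k \<ge> 2 then of_nat (2 * k * (k - 1)) * gamma * zeta (k - 2) else 0)"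

definition Jm :: "nat \<Rightarrow> cpoly2 set" where
  "Jm k = {a * zeta k + b * zeta (k + 1) + c * zeta (k + 2) | a b c. True}"

definition hcomp :: "nat \<Rightarrow> cpoly2 set" where
  "hcomp r = {p. \<forall>i j. coeff (coeff p j) i \<noteq> 0 \<longrightarrow> (2 * (i + j)) mod 4 = r}"

text \<open>qdim S J n: the complex vector space S/(J \<inter> S) has dimension n,
  i.e. there are n elements of S forming a basis modulo J.\<close>
definition qdim :: "cpoly2 set \<Rightarrow> cpoly2 set \<Rightarrow> nat \<Rightarrow> bool" where
  "qdim S J n \<longleftrightarrow> (\<exists>v :: nat \<Rightarrow> cpoly2.
      (\<forall>i<n. v i \<in> S)
    \<and> (\<forall>c :: nat \<Rightarrow> complex. (\<Sum>i<n. cconst (c i) * v i) \<in> J \<longrightarrow> (\<forall>i<n. c i = 0))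
    \<and> (\<forall>s\<in>S. \<exists>c :: nat \<Rightarrow> complex. s - (\<Sum>i<n. cconst (c i) * v i) \<in> J))"

end

theory Submission
  imports Defs
begin

definition Ez :: "nat \<Rightarrow> cpoly2" where "Ez k = zeta (2*k)"
definition Oz :: "nat \<Rightarrow> cpoly2" where "Oz k = zeta (2*k+1)"

abbreviation X :: "complex poly" where "X \<equiv> [:0, 1:]"

lemma alpha_const: "alpha = [:X:]" by (simp add: alpha_def)

lemma R1: "Oz k = alpha * Ez k + of_nat (2*(2*k)*(2*k-1)) * gamma * Ez (k-1)"
proof -
  have "Oz k = zeta (Suc (2*k))" by (simp add: Oz_def)
  also have "\<dots> = alpha * Ez k + of_nat (2*(2*k)*(2*k-1)) * gamma * Ez (k-1)"
  proof (cases k)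
    case 0 then show ?thesis by (simp add: Ez_def)
  next
    case (Suc m)
    then have "2*k - 2 = 2*(k-1)" by simp
    then show ?thesis using Suc by (simp add: Ez_def)
  qed
  finally show ?thesis .
qed

lemma R2: "Ez (Suc k) = alpha * Oz k - of_nat (16*(2*k+1)^2) * Ez k
            + of_nat (2*(2*k+1)*(2*k)) * gamma * Oz (k-1)"
proof -
  have "Ez (Suc k) = zeta (Suc (2*k+1))" by (simp add: Ez_def)
  also have "\<dots> = alpha * Oz k - of_nat (16*(2*k+1)^2) * Ez k
            + of_nat (2*(2*k+1)*(2*k)) * gamma * Oz (k-1)"
  proof (cases k)
    case 0 then show ?thesis by (simp add: Ez_def Oz_def)
  next
    case (Suc m)
    then have "2*k + 1 - 2 = 2*(k-1)+1" by simp
    then show ?thesis using Suc by (simp add: Ez_def Oz_def algebra_simps)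
  qed
  finally show ?thesis .
qed

definition cn :: "nat \<Rightarrow> nat" where "cn k = 16*(2*k+1)^2"
definition dn :: "nat \<Rightarrow> nat" where "dn k = 2*(2*k)*(2*k-1)"
definition en :: "nat \<Rightarrow> nat" where "en k = 2*(2*k+1)*(2*k)"

lemma R1': "Oz k = alpha * Ez k + of_nat (dn k) * gamma * Ez (k-1)"
  using R1 by (simp add: dn_def)
lemma R2': "Ez (Suc k) = alpha * Oz k - of_nat (cn k) * Ez k + of_nat (en k) * gamma * Oz (k-1)"
  using R2 by (simp add: cn_def en_def)

lemma Erec: "Ez (Suc m) = (alpha^2 - of_nat (cn m)) * Ez m
   + of_nat (dn m + en m) * alpha * gamma * Ez (m-1)
   + of_nat (en m * dn (m-1)) * gamma^2 * Ez (m-2)"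
proof -
  have a: "Oz m = alpha * Ez m + of_nat (dn m) * gamma * Ez (m-1)" by (rule R1')
  have b: "Oz (m-1) = alpha * Ez (m-1) + of_nat (dn (m-1)) * gamma * Ez (m-2)"
    using R1'[of "m-1"] by (metis diff_diff_left one_add_one)
  show ?thesis unfolding R2' a b by (simp add: algebra_simps power2_eq_square)
qed

declare zeta.simps(2)[simp del]

lemma Jm_iff: "x \<in> Jm g \<longleftrightarrow> (\<exists>a b c. x = a * zeta g + b * zeta (g+1) + c * zeta (g+2))"
  by (auto simp: Jm_def)

lemma Jm_add: "x \<in> Jm g \<Longrightarrow> y \<in> Jm g \<Longrightarrow> x + y \<in> Jm g"
  unfolding Jm_iff
proof (elim exE)
  fix a b c a' b' c'
  assume "x = a * zeta g + b * zeta (g+1) + c * zeta (g+2)" "y = a' * zeta g + b' * zeta (g+1) + c' * zeta (g+2)"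
  then show "\<exists>a b c. x + y = a * zeta g + b * zeta (g+1) + c * zeta (g+2)"
    by (intro exI[of _ "a+a'"] exI[of _ "b+b'"] exI[of _ "c+c'"]) (simp add: algebra_simps)
qed

lemma Jm_mult: "x \<in> Jm g \<Longrightarrow> r * x \<in> Jm g"
  unfolding Jm_iff
proof (elim exE)
  fix a b c
  assume "x = a * zeta g + b * zeta (g+1) + c * zeta (g+2)"
  then show "\<exists>a b c. r * x = a * zeta g + b * zeta (g+1) + c * zeta (g+2)"
    by (intro exI[of _ "r*a"] exI[of _ "r*b"] exI[of _ "r*c"]) (simp add: algebra_simps)
qed

lemma Jm_0: "0 \<in> Jm g" unfolding Jm_iff by (rule exI[of _ 0], rule exI[of _ 0], rule exI[of _ 0]) simp

lemma Jm_g0: "zeta g \<in> Jm g" unfolding Jm_iff by (rule exI[of _ 1], rule exI[of _ 0], rule exI[of _ 0]) simp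
lemma Jm_g1: "zeta (Suc g) \<in> Jm g" unfolding Jm_iff by (rule exI[of _ 0], rule exI[of _ 1], rule exI[of _ 0]) simp
lemma Jm_g2: "zeta (Suc (Suc g)) \<in> Jm g" unfolding Jm_iff by (rule exI[of _ 0], rule exI[of _ 0], rule exI[of _ 1]) simp

lemma Jm_uminus: "x \<in> Jm g \<Longrightarrow> - x \<in> Jm g" using Jm_mult[of x g "-1"] by simp
lemma Jm_diff: "x \<in> Jm g \<Longrightarrow> y \<in> Jm g \<Longrightarrow> x - y \<in> Jm g"
  using Jm_add[of x g "-y"] Jm_uminus[of y g] by simp

lemma Jm_sum: "(\<And>i. i \<in> A \<Longrightarrow> f i \<in> Jm g) \<Longrightarrow> sum f A \<in> Jm g"
proof (induction A rule: infinite_finite_induct)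
  case (infinite A) then show ?case by (simp add: Jm_0)
next
  case empty then show ?case by (simp add: Jm_0)
next
  case (insert x F) then show ?case by (simp add: Jm_add)
qed

lemma of_nat_cp: "(of_nat n :: cpoly2) = [:[:of_nat n:]:]"
  by (simp add: of_nat_poly)

lemma cconst_inv: "n \<noteq> 0 \<Longrightarrow> cconst (1 / of_nat n) * (of_nat n * y) = y"
proof -
  assume "n \<noteq> 0"
  have "cconst (1 / of_nat n) * (of_nat n :: cpoly2) = 1"
    using \<open>n \<noteq> 0\<close> by (simp add: cconst_def of_nat_cp one_pCons)
  then show ?thesis by (metis mult.assoc mult_1)
qed

lemma zeta_Ez: "zeta (2*k) = Ez k" by (simp add: Ez_def)
lemma zeta_Oz: "zeta (Suc (2*k)) = Oz k" by (simp add: Oz_def)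

lemma Jm_even_gens:
  "Ez k \<in> Jm (2*k)" "Oz k \<in> Jm (2*k)" "Ez (Suc k) \<in> Jm (2*k)"
  using Jm_g0[of "2*k"] Jm_g1[of "2*k"] Jm_g2[of "2*k"]
  by (simp_all add: Ez_def Oz_def)

lemma gammaE_in: "gamma * Ez k \<in> Jm (2 * Suc k)"
proof -
  have "Oz (Suc k) = alpha * Ez (Suc k) + of_nat (dn (Suc k)) * gamma * Ez k" using R1'[of "Suc k"] by simp
  then have "of_nat (dn (Suc k)) * (gamma * Ez k) = Oz (Suc k) - alpha * Ez (Suc k)" by (simp add: algebra_simps)
  moreover have "dn (Suc k) \<noteq> 0" by (simp add: dn_def)
  ultimately have "gamma * Ez k = cconst (1 / of_nat (dn (Suc k))) * (Oz (Suc k) - alpha * Ez (Suc k))"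
    using cconst_inv by metis
  moreover have "Oz (Suc k) - alpha * Ez (Suc k) \<in> Jm (2 * Suc k)"
    using Jm_even_gens[of "Suc k"] by (intro Jm_diff Jm_mult) auto
  ultimately show ?thesis by (simp add: Jm_mult)
qed

lemma gammaO_in: "gamma * Oz k \<in> Jm (2 * Suc k)"
proof -
  have "Ez (Suc (Suc k)) = alpha * Oz (Suc k) - of_nat (cn (Suc k)) * Ez (Suc k) + of_nat (en (Suc k)) * gamma * Oz k"
    using R2'[of "Suc k"] by simp
  then have "of_nat (en (Suc k)) * (gamma * Oz k) = Ez (Suc (Suc k)) - alpha * Oz (Suc k) + of_nat (cn (Suc k)) * Ez (Suc k)"
    by (simp add: algebra_simps)
  moreover have "en (Suc k) \<noteq> 0" by (simp add: en_def)
  ultimately have "gamma * Oz k = cconst (1 / of_nat (en (Suc k))) * (Ez (Suc (Suc k)) - alpha * Oz (Suc k) + of_nat (cn (Suc k)) * Ez (Suc k))"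
    using cconst_inv by metis
  moreover have "Ez (Suc (Suc k)) - alpha * Oz (Suc k) + of_nat (cn (Suc k)) * Ez (Suc k) \<in> Jm (2 * Suc k)"
    using Jm_even_gens[of "Suc k"] by (intro Jm_add Jm_diff Jm_mult) auto
  ultimately show ?thesis by (simp add: Jm_mult)
qed

lemma gammaN: "x \<in> Jm (2*k) \<Longrightarrow> gamma * x \<in> Jm (2 * Suc k)"
proof -
  assume "x \<in> Jm (2*k)"
  then obtain a b c where x: "x = a * Ez k + b * Oz k + c * Ez (Suc k)"
  proof -
    from \<open>x \<in> Jm (2*k)\<close> obtain a b c where "x = a * zeta (2*k) + b * zeta (2*k+1) + c * zeta (2*k+2)"
      unfolding Jm_iff by blast
    moreover have "zeta (2*k+2) = Ez (Suc k)" by (simp add: Ez_def)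
    moreover have "zeta (2*k+1) = Oz k" by (simp add: Oz_def)
    ultimately show ?thesis using that by (simp add: Ez_def)
  qed
  have "gamma * x = a * (gamma * Ez k) + b * (gamma * Oz k) + c * (gamma * Ez (Suc k))"
    by (simp add: x algebra_simps)
  moreover have "gamma * Ez (Suc k) \<in> Jm (2 * Suc k)"
    using Jm_even_gens(1)[of "Suc k"] by (rule Jm_mult)
  ultimately show ?thesis using gammaE_in gammaO_in by (simp add: Jm_add Jm_mult)
qed

lemma IinN: "gamma ^ j * Ez (k - j) \<in> Jm (2*k)"
proof (induction k arbitrary: j)
  case 0
  have "Ez 0 = 1" by (simp add: Ez_def)
  then show ?case using Jm_mult[OF Jm_even_gens(1)[of 0], of "gamma^j"] by simp
next
  case (Suc k)
  show ?case
  proof (cases j)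
    case 0 then show ?thesis using Jm_even_gens(1)[of "Suc k"] by simp
  next
    case (Suc i)
    have "gamma ^ j * Ez (Suc k - j) = gamma * (gamma ^ i * Ez (k - i))" using Suc by simp
    then show ?thesis using gammaN[OF Suc.IH[of i]] by simp
  qed
qed

lemma gamma_pow: "gamma ^ i = monom 1 i"
proof -
  have "gamma = monom 1 1" by (simp add: gamma_def monom_Suc)
  then have "gamma ^ i = monom 1 1 ^ i" by simp
  then show ?thesis by (simp add: monom_power)
qed

lemma coeff_gpow_mult: "coeff (gamma ^ i * p) j = (if j < i then 0 else coeff p (j - i))"
  by (simp add: gamma_pow coeff_monom_mult)

lemma coeff_gamma_mult: "coeff (gamma * p) j = (if j = 0 then 0 else coeff p (j - 1))"
  using coeff_gpow_mult[of 1 p j] by auto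

lemma coeff_const_mult: "coeff ([:c:] * p) j = c * coeff p j"
  by simp

lemma Erec': "Ez (Suc m) = [:X^2 - of_nat (cn m):] * Ez m
   + [:of_nat (dn m + en m) * X:] * gamma * Ez (m-1)
   + [:of_nat (en m * dn (m-1)):] * gamma^2 * Ez (m-2)"
proof -
  have 1: "alpha^2 - of_nat (cn m) = [:X^2 - of_nat (cn m):]"
    by (simp add: alpha_const of_nat_cp power2_eq_square of_nat_poly)
  have 2: "of_nat (dn m + en m) * alpha = [:of_nat (dn m + en m) * X:]"
    by (simp add: alpha_const of_nat_cp of_nat_poly del: of_nat_add)
  have 3: "(of_nat (en m * dn (m-1)) :: cpoly2) = [:of_nat (en m * dn (m-1)):]"
    by (simp add: of_nat_poly)
  show ?thesis using Erec[of m] unfolding 1 3 2[symmetric] by (simp add: mult.assoc)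
qed

definition Kset :: "nat \<Rightarrow> cpoly2 set" where
  "Kset k = {x. \<exists>a b. x = (\<Sum>j<k. [:a j:] * gamma^j * Ez (k-j)) + b * gamma^k}"

lemma Kset_term: "[:q:] * gamma^i * Ez (k-i) \<in> Kset k"
proof (cases "i < k")
  case True
  let ?a = "\<lambda>j. if j = i then q else 0"
  have "(\<Sum>j<k. [:?a j:] * gamma^j * Ez (k-j)) = [:q:] * gamma^i * Ez (k-i)"
    using True by (simp add: if_distrib[of "\<lambda>x. [:x:]"] if_distrib[of "\<lambda>x. x * _"] cong: if_cong)
  then show ?thesis unfolding Kset_def by (auto intro!: exI[of _ ?a] exI[of _ 0])
next
  case False
  then have "[:q:] * gamma^i * Ez (k-i) = 0 + ([:q:] * gamma^(i-k)) * gamma^k"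
    by (simp add: Ez_def mult.assoc power_add[symmetric])
  moreover have "(\<Sum>j<k. [:0:] * gamma^j * Ez (k-j)) = 0" by simp
  ultimately show ?thesis unfolding Kset_def
    by (auto intro!: exI[of _ "\<lambda>_. 0"] exI[of _ "[:q:] * gamma^(i-k)"])
qed

lemma Kset_add: "x \<in> Kset k \<Longrightarrow> y \<in> Kset k \<Longrightarrow> x + y \<in> Kset k"
proof -
  assume "x \<in> Kset k" "y \<in> Kset k"
  then obtain a b a' b' where x: "x = (\<Sum>j<k. [:a j:] * gamma^j * Ez (k-j)) + b * gamma^k"
    and y: "y = (\<Sum>j<k. [:a' j:] * gamma^j * Ez (k-j)) + b' * gamma^k"
    unfolding Kset_def by blast
  have "x + y = (\<Sum>j<k. [:a j + a' j:] * gamma^j * Ez (k-j)) + (b + b') * gamma^k"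
    by (simp add: x y sum.distrib smult_add_left algebra_simps)
  then show ?thesis unfolding Kset_def mem_Collect_eq
    by (intro exI[of _ "\<lambda>j. a j + a' j"] exI[of _ "b + b'"])
qed

lemma Kset_0: "0 \<in> Kset k"
  unfolding Kset_def by (auto intro!: exI[of _ "\<lambda>_. 0"] exI[of _ 0])

lemma Kset_sum: "(\<And>i. i \<in> A \<Longrightarrow> f i \<in> Kset k) \<Longrightarrow> sum f A \<in> Kset k"
proof (induction A rule: infinite_finite_induct)
  case (infinite A) then show ?case by (simp add: Kset_0)
next
  case empty then show ?case by (simp add: Kset_0)
next
  case (insert x F) then show ?case by (simp add: Kset_add)
qed

lemma Kset_const: "x \<in> Kset k \<Longrightarrow> [:q:] * x \<in> Kset k"
proof -
  assume "x \<in> Kset k"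
  then obtain a b where x: "x = (\<Sum>j<k. [:a j:] * gamma^j * Ez (k-j)) + b * gamma^k"
    unfolding Kset_def by blast
  have "[:q:] * x = (\<Sum>j<k. [:q * a j:] * gamma^j * Ez (k-j)) + ([:q:] * b) * gamma^k"
    by (simp add: x sum_distrib_left algebra_simps)
  then show ?thesis unfolding Kset_def mem_Collect_eq
    by (intro exI[of _ "\<lambda>j. q * a j"] exI[of _ "[:q:] * b"])
qed

lemma Kset_gamma_term: "gamma * ([:q:] * gamma^i * Ez (k-i)) \<in> Kset k"
proof (cases "i < k")
  case True
  define m where "m = k - Suc i"
  have km: "k - i = Suc m" using True by (simp add: m_def)
  have m1: "k - (i+2) = m - 1" "k - (i+3) = m - 2" "k - (i+1) = m" by (simp_all add: m_def)
  have "gamma * ([:q:] * gamma^i * Ez (Suc m)) =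
      [:q * (X^2 - of_nat (cn m)):] * gamma^(i+1) * Ez m
    + [:q * (of_nat (dn m + en m) * X):] * gamma^(i+2) * Ez (m-1)
    + [:q * of_nat (en m * dn (m-1)):] * gamma^(i+3) * Ez (m-2)"
    unfolding Erec'[of m] by (simp add: algebra_simps power2_eq_square numeral_3_eq_3)
  then have "gamma * ([:q:] * gamma^i * Ez (k-i)) =
      [:q * (X^2 - of_nat (cn m)):] * gamma^(i+1) * Ez (k-(i+1))
    + [:q * (of_nat (dn m + en m) * X):] * gamma^(i+2) * Ez (k-(i+2))
    + [:q * of_nat (en m * dn (m-1)):] * gamma^(i+3) * Ez (k-(i+3))"
    unfolding km m1 .
  then show ?thesis unfolding km by (simp only: Kset_add Kset_term)
next
  case False
  then have "gamma * ([:q:] * gamma^i * Ez (k-i)) = [:q:] * gamma^(i+1) * Ez (k-(i+1))"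
    by (simp add: Ez_def algebra_simps)
  then show ?thesis by (simp only: Kset_term)
qed

lemma Kset_gamma: "x \<in> Kset k \<Longrightarrow> gamma * x \<in> Kset k"
proof -
  assume "x \<in> Kset k"
  then obtain a b where x: "x = (\<Sum>j<k. [:a j:] * gamma^j * Ez (k-j)) + b * gamma^k"
    unfolding Kset_def by blast
  have "gamma * x = (\<Sum>j<k. gamma * ([:a j:] * gamma^j * Ez (k-j))) + 0 + (gamma * b) * gamma^k"
    by (simp add: x sum_distrib_left algebra_simps)
  moreover have "(\<Sum>j<k. gamma * ([:a j:] * gamma^j * Ez (k-j))) \<in> Kset k"
    by (rule Kset_sum) (rule Kset_gamma_term)
  moreover have "0 + (gamma * b) * gamma^k \<in> Kset k"
    unfolding Kset_def mem_Collect_eq by (rule exI[of _ "\<lambda>_. 0"], rule exI[of _ "gamma * b"]) simp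
  ultimately show ?thesis by (simp add: Kset_add)
qed

lemma pCons_split: "pCons q r = [:q:] + gamma * r"
  by (simp add: gamma_def)

lemma Kset_mult: "x \<in> Kset k \<Longrightarrow> r * x \<in> Kset k"
proof (induction r)
  case 0 then show ?case by (simp add: Kset_0)
next
  case (pCons q r)
  have "pCons q r * x = ([:q:] + gamma * r) * x"
    by (subst pCons_split) (rule refl)
  also have "\<dots> = [:q:] * x + gamma * (r * x)" by (simp only: distrib_right mult.assoc)
  finally have "pCons q r * x = [:q:] * x + gamma * (r * x)" .
  then show ?case using pCons by (metis Kset_add Kset_const Kset_gamma)
qed

lemma N_sub_K: "x \<in> Jm (2*k) \<Longrightarrow> x \<in> Kset k"
proof -
  assume "x \<in> Jm (2*k)"
  then obtain a b c where x: "x = a * zeta (2*k) + b * zeta (2*k+1) + c * zeta (2*k+2)"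
    unfolding Jm_iff by blast
  have g1: "Ez k \<in> Kset k" using Kset_term[of 1 0 k] by simp
  have g2: "Oz k \<in> Kset k"
  proof -
    have "Oz k = [:X:] * gamma^0 * Ez (k-0) + [:of_nat (dn k):] * gamma^1 * Ez (k-1)"
      by (simp add: R1' alpha_const of_nat_cp of_nat_poly)
    then show ?thesis by (simp only: Kset_add Kset_term)
  qed
  have g3: "Ez (Suc k) \<in> Kset k"
  proof -
    have "Ez (Suc k) = [:X^2 - of_nat (cn k):] * gamma^0 * Ez (k-0)
       + [:of_nat (dn k + en k) * X:] * gamma^1 * Ez (k-1)
       + [:of_nat (en k * dn (k-1)):] * gamma^2 * Ez (k-2)"
      using Erec'[of k] by simp
    then show ?thesis by (simp only: Kset_add Kset_term)
  qed
  have "zeta (2*k) = Ez k" "zeta (2*k+1) = Oz k" "zeta (2*k+2) = Ez (Suc k)"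
    by (simp_all add: Ez_def Oz_def)
  then have "x = a * Ez k + b * Oz k + c * Ez (Suc k)" using x by simp
  then show ?thesis using g1 g2 g3 by (simp only: Kset_add Kset_mult)
qed

lemma K_sub_N: "x \<in> Kset k \<Longrightarrow> x \<in> Jm (2*k)"
proof -
  assume "x \<in> Kset k"
  then obtain a b where x: "x = (\<Sum>j<k. [:a j:] * gamma^j * Ez (k-j)) + b * gamma^k"
    unfolding Kset_def by blast
  have "(\<Sum>j<k. [:a j:] * gamma^j * Ez (k-j)) \<in> Jm (2*k)"
    by (rule Jm_sum) (metis mult.assoc Jm_mult IinN)
  moreover have "b * gamma^k = b * (gamma^k * Ez (k-k))" by (simp add: Ez_def)
  then have "b * gamma^k \<in> Jm (2*k)" using IinN Jm_mult by metis
  ultimately show ?thesis by (simp add: x Jm_add)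
qed

definition ep :: "nat \<Rightarrow> complex poly" where "ep m = coeff (Ez m) 0"

lemma coeff0_gamma: "coeff (gamma * p) 0 = 0" by (simp add: coeff_gamma_mult)

lemma ep_0: "ep 0 = 1" by (simp add: ep_def Ez_def)

lemma ep_Suc: "ep (Suc m) = (X^2 - of_nat (cn m)) * ep m"
proof -
  have "coeff (Ez (Suc m)) 0 = coeff ([:X^2 - of_nat (cn m):] * Ez m) 0"
    unfolding Erec'[of m] by (simp add: coeff_mult_0 gamma_def power2_eq_square)
  then show ?thesis by (simp add: ep_def)
qed

lemma quad_eq: "X^2 - of_nat c = [:- of_nat c, 0, 1:]"
  by (simp add: power2_eq_square of_nat_poly)

lemma ep_nz: "ep m \<noteq> 0 \<and> degree (ep m) = 2*m"
proof (induction m)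
  case 0 then show ?case by (simp add: ep_0)
next
  case (Suc m)
  have q: "X^2 - of_nat (cn m) \<noteq> 0" "degree (X^2 - of_nat (cn m)) = 2"
    by (simp_all add: quad_eq)
  then show ?case using Suc by (simp add: ep_Suc degree_mult_eq)
qed

lemma coeff_Oz0: "coeff (Oz m) 0 = X * ep m"
  by (simp add: R1' coeff_mult_0 gamma_def alpha_const ep_def)

lemma Kcoeff:
  assumes "j < k" "\<forall>i<j. a i = 0"
  shows "coeff ((\<Sum>i<k. [:a i:] * gamma^i * Ez (k-i)) + b * gamma^k) j = a j * ep (k-j)"
proof -
  have "coeff (b * gamma^k) j = 0" using assms(1) by (subst mult.commute) (simp add: coeff_gpow_mult)
  moreover have "coeff (\<Sum>i<k. [:a i:] * gamma^i * Ez (k-i)) j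
      = (\<Sum>i<k. if i = j then a j * ep (k-j) else 0)"
    unfolding coeff_sum
  proof (rule sum.cong[OF refl])
    fix i assume "i \<in> {..<k}"
    have "coeff ([:a i:] * gamma^i * Ez (k-i)) j = a i * coeff (gamma^i * Ez (k-i)) j"
      by (simp add: mult.assoc)
    also have "\<dots> = (if i = j then a j * ep (k-j) else 0)"
      using assms(2) by (auto simp: coeff_gpow_mult ep_def)
    finally show "coeff ([:a i:] * gamma^i * Ez (k-i)) j = (if i = j then a j * ep (k-j) else 0)" .
  qed
  ultimately show ?thesis using assms(1) by simp
qed

definition std :: "nat \<Rightarrow> cpoly2 \<Rightarrow> bool" where
  "std k s \<longleftrightarrow> (\<forall>j. k \<le> j \<longrightarrow> coeff s j = 0) \<and> (\<forall>j<k. degree (coeff s j) < 2*(k-j))"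

lemma K_indep:
  assumes "x \<in> Kset k" "std k x"
  shows "x = 0"
proof -
  obtain a b where x: "x = (\<Sum>i<k. [:a i:] * gamma^i * Ez (k-i)) + b * gamma^k"
    using assms(1) unfolding Kset_def by blast
  have a0: "\<forall>i<j. a i = 0" if "j \<le> k" for j
    using that
  proof (induction j)
    case 0 then show ?case by simp
  next
    case (Suc j)
    then have IH: "\<forall>i<j. a i = 0" by simp
    have "j < k" using Suc.prems by simp
    have c: "coeff x j = a j * ep (k-j)" using Kcoeff[OF \<open>j < k\<close> IH] x by simp
    have "a j = 0"
    proof (rule ccontr)
      assume "a j \<noteq> 0"
      then have "degree (coeff x j) = degree (a j) + 2*(k-j)"
        using c ep_nz[of "k-j"] by (simp add: degree_mult_eq)
      moreover have "degree (coeff x j) < 2*(k-j)" using assms(2) \<open>j < k\<close> by (simp add: std_def)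
      ultimately show False by simp
    qed
    then show ?case using IH by (auto simp: less_Suc_eq)
  qed
  have "\<forall>i<k. a i = 0" using a0[of k] by simp
  then have "x = gamma^k * b" by (simp add: x mult.commute)
  then have "\<forall>j. coeff x j = 0"
    using assms(2) by (auto simp: std_def coeff_gpow_mult not_le)
  then show ?thesis by (simp add: poly_eq_iff)
qed

lemma N_indep: "x \<in> Jm (2*k) \<Longrightarrow> std k x \<Longrightarrow> x = 0"
  using K_indep N_sub_K by blast

lemma N_coeff0_dvd: "x \<in> Jm (2 * Suc k) \<Longrightarrow> ep (Suc k) dvd coeff x 0"
proof -
  assume "x \<in> Jm (2 * Suc k)"
  then have "x \<in> Kset (Suc k)" by (rule N_sub_K)
  then obtain a b where x: "x = (\<Sum>i<Suc k. [:a i:] * gamma^i * Ez (Suc k-i)) + b * gamma^(Suc k)"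
    unfolding Kset_def by blast
  have "coeff x 0 = a 0 * ep (Suc k)" using Kcoeff[of 0 "Suc k" a b] x by simp
  then show ?thesis by simp
qed

lemma gamma_ne0: "gamma \<noteq> 0" by (simp add: gamma_def)

lemma N_colon: "gamma * y \<in> Jm (2 * Suc k) \<Longrightarrow> y \<in> Jm (2*k)"
proof -
  assume "gamma * y \<in> Jm (2 * Suc k)"
  then have "gamma * y \<in> Kset (Suc k)" by (rule N_sub_K)
  then obtain a b where x: "gamma * y = (\<Sum>i<Suc k. [:a i:] * gamma^i * Ez (Suc k-i)) + b * gamma^(Suc k)"
    unfolding Kset_def by blast
  have "coeff (gamma * y) 0 = a 0 * ep (Suc k)" using Kcoeff[of 0 "Suc k" a b] x by simp
  then have "a 0 * ep (Suc k) = 0" by (simp add: coeff0_gamma)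
  then have "a 0 = 0" using ep_nz[of "Suc k"] by simp
  have "gamma * y = gamma * ((\<Sum>i<k. [:a (Suc i):] * gamma^i * Ez (k-i)) + b * gamma^k)"
    unfolding x sum.lessThan_Suc_shift using \<open>a 0 = 0\<close>
    by (simp add: sum_distrib_left algebra_simps)
  then have "y = (\<Sum>i<k. [:a (Suc i):] * gamma^i * Ez (k-i)) + b * gamma^k"
    using gamma_ne0 by simp
  then have "y \<in> Kset k" unfolding Kset_def mem_Collect_eq
    by (intro exI[of _ "\<lambda>i. a (Suc i)"] exI[of _ b])
  then show ?thesis by (rule K_sub_N)
qed

lemma N_span_aux:
  "j \<le> k \<Longrightarrow> \<exists>s. (\<forall>i<j. degree (coeff s i) < 2*(k-i)) \<and> p - s \<in> Jm (2*k)"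
proof (induction j)
  case 0 then show ?case by (auto intro!: exI[of _ p] simp: Jm_0)
next
  case (Suc j)
  then obtain s where s: "\<forall>i<j. degree (coeff s i) < 2*(k-i)" "p - s \<in> Jm (2*k)" by auto
  have jk: "j < k" using Suc.prems by simp
  define q where "q = coeff s j div ep (k-j)"
  define s' where "s' = s - [:q:] * gamma^j * Ez (k-j)"
  have cs': "coeff s' i = coeff s i - (if i < j then 0 else q * coeff (Ez (k-j)) (i-j))" for i
    by (simp add: s'_def mult.assoc coeff_gpow_mult)
  have "degree (coeff s' i) < 2*(k-i)" if "i < Suc j" for i
  proof (cases "i < j")
    case True then show ?thesis using s(1) cs' by simp
  next
    case False
    then have ij: "i = j" using that by simp
    have "coeff s' j = coeff s j mod ep (k-j)"
      using cs'[of j] by (simp add: q_def ep_def mod_eq_dvd_iff minus_div_mult_eq_mod [symmetric] mult.commute)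
    moreover have "ep (k-j) \<noteq> 0" "degree (ep (k-j)) = 2*(k-j)" using ep_nz by auto
    ultimately show ?thesis using ij jk degree_mod_less[of "ep (k-j)" "coeff s j"]
      by (cases "coeff s j mod ep (k - j) = 0") auto
  qed
  moreover have "p - s' \<in> Jm (2*k)"
  proof -
    have "p - s' = (p - s) + [:q:] * (gamma^j * Ez (k-j))" by (simp add: s'_def algebra_simps)
    moreover have "[:q:] * (gamma^j * Ez (k-j)) \<in> Jm (2*k)" by (rule Jm_mult[OF IinN])
    ultimately show ?thesis using Jm_add[OF s(2)] by metis
  qed
  ultimately show ?case by blast
qed

lemma N_span: "\<exists>s. std k s \<and> p - s \<in> Jm (2*k)"
proof -
  obtain s where s: "\<forall>i<k. degree (coeff s i) < 2*(k-i)" "p - s \<in> Jm (2*k)"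
    using N_span_aux[of k k p] by auto
  define s'' where "s'' = poly_cutoff k s"
  have "s = s'' + gamma^k * poly_shift k s"
    by (auto simp: poly_eq_iff s''_def coeff_poly_cutoff coeff_gpow_mult coeff_poly_shift)
  then have "p - s'' = (p - s) + poly_shift k s * (gamma^k * Ez (k-k))"
    by (simp add: Ez_def algebra_simps)
  moreover have "poly_shift k s * (gamma^k * Ez (k-k)) \<in> Jm (2*k)" by (rule Jm_mult[OF IinN])
  ultimately have "p - s'' \<in> Jm (2*k)" using Jm_add[OF s(2)] by metis
  moreover have "std k s''" using s(1) by (simp add: std_def s''_def coeff_poly_cutoff)
  ultimately show ?thesis by blast
qed

definition PosP :: "complex poly \<Rightarrow> bool" where
  "PosP p \<longleftrightarrow> (\<forall>x::real. x \<noteq> 0 \<longrightarrow> Im (poly p (of_real x)) = 0 \<and> 0 \<le> Re (poly p (of_real x)))"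
definition NZ :: "complex poly \<Rightarrow> bool" where
  "NZ p \<longleftrightarrow> (\<forall>x::real. x \<noteq> 0 \<longrightarrow> poly p (of_real x) \<noteq> 0)"

lemma PosP_add: "PosP p \<Longrightarrow> PosP q \<Longrightarrow> PosP (p + q)"
  by (simp add: PosP_def)
lemma PosP_mult: "PosP p \<Longrightarrow> PosP q \<Longrightarrow> PosP (p * q)"
  by (simp add: PosP_def)
lemma PosP_nat: "PosP (of_nat n)"
  by (simp add: PosP_def of_nat_poly)
lemma PosP_X2: "PosP (X^2)"
  by (simp add: PosP_def power2_eq_square)
lemma PosP_1: "PosP 1" by (simp add: PosP_def)
lemma PosP_0: "PosP 0" by (simp add: PosP_def)

lemma NZ_add: "PosP p \<Longrightarrow> PosP q \<Longrightarrow> NZ p \<Longrightarrow> NZ (p + q)"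
proof -
  assume a: "PosP p" "PosP q" "NZ p"
  show "NZ (p + q)" unfolding NZ_def
  proof (intro allI impI)
    fix x :: real assume "x \<noteq> 0"
    then have "Im (poly p x) = 0" "0 \<le> Re (poly p x)" "Im (poly q x) = 0" "0 \<le> Re (poly q x)"
      "poly p x \<noteq> 0" using a by (auto simp: PosP_def NZ_def)
    then have "Re (poly p x) \<noteq> 0" by (simp add: complex_eq_iff)
    then have "Re (poly (p + q) x) > 0" using \<open>0 \<le> Re (poly p x)\<close> \<open>0 \<le> Re (poly q x)\<close> by simp
    then show "poly (p + q) x \<noteq> 0" by (metis less_irrefl zero_complex.sel(1))
  qed
qed

lemma NZ_add2: "PosP p \<Longrightarrow> PosP q \<Longrightarrow> NZ q \<Longrightarrow> NZ (p + q)"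
  using NZ_add[of q p] by (simp add: add.commute)

lemma NZ_mult: "NZ p \<Longrightarrow> NZ q \<Longrightarrow> NZ (p * q)"
  by (simp add: NZ_def)
lemma NZ_nat: "n \<noteq> 0 \<Longrightarrow> NZ (of_nat n)"
  by (simp add: NZ_def of_nat_poly)
lemma NZ_X: "NZ X" by (simp add: NZ_def)
lemma NZ_X2: "NZ (X^2)" by (simp add: NZ_def)
lemma NZ_1: "NZ 1" by (simp add: NZ_def)

lemma quad_dvd:
  assumes "NZ h" "(X^2 - of_nat (cn m)) dvd q * h"
  shows "(X^2 - of_nat (cn m)) dvd q"
proof -
  define l :: complex where "l = of_nat (4*(2*m+1))"
  have lr: "l = of_real (real (4*(2*m+1)))" by (simp add: l_def)
  have l0: "real (4*(2*m+1)) \<noteq> 0" by simp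
  have fac: "X^2 - of_nat (cn m) = [:- l, 1:] * [:l, 1:]"
    unfolding l_def by (simp add: cn_def of_nat_poly power2_eq_square algebra_simps)
  have hl: "poly h l \<noteq> 0" using assms(1) l0 unfolding NZ_def lr by blast
  have "- real (4*(2*m+1)) \<noteq> 0" by simp
  then have "poly h (of_real (- real (4*(2*m+1)))) \<noteq> 0" using assms(1) unfolding NZ_def by blast
  then have hml: "poly h (- l) \<noteq> 0" by (simp only: of_real_minus lr not_False_eq_True)
  from assms(2) obtain k where k: "q * h = ([:- l, 1:] * [:l, 1:]) * k"
    unfolding fac by (auto elim: dvdE)
  have "poly (q * h) l = 0" "poly (q * h) (-l) = 0" unfolding k by simp_all
  then have q1: "poly q l = 0" "poly q (-l) = 0" using hl hml by auto
  then obtain q1 where q1e: "q = [:- l, 1:] * q1" using poly_eq_0_iff_dvd by (metis dvdE)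
  have "l \<noteq> 0" unfolding l_def by (simp only: of_nat_eq_0_iff) simp
  then have "2 * l \<noteq> 0" by simp
  moreover have "- l - l = - (2 * l)" by simp
  ultimately have ln: "- l - l \<noteq> 0" by simp
  have "(- l - l) * poly q1 (-l) = 0" using q1(2) unfolding q1e by simp
  then have "poly q1 (-l) = 0" using ln by simp
  then obtain q2 where "q1 = [:l, 1:] * q2" using poly_eq_0_iff_dvd[of q1 "-l"] by (auto elim: dvdE)
  then have "q = ([:- l, 1:] * [:l, 1:]) * q2" using q1e by (simp only: mult.assoc)
  then have "q = (X^2 - of_nat (cn m)) * q2" by (simp only: fac)
  then show ?thesis by simp
qed

lemma L1: "(alpha^2 - of_nat (cn m)) * Ez m = Ez (Suc m) - gamma * (of_nat (en m) * Oz (m-1) + of_nat (dn m) * alpha * Ez (m-1))"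
proof -
  have "alpha * Ez m = Oz m - of_nat (dn m) * gamma * Ez (m-1)" using R1'[of m] by simp
  then have "alpha^2 * Ez m = alpha * Oz m - of_nat (dn m) * gamma * alpha * Ez (m-1)"
    by (simp add: power2_eq_square mult.assoc right_diff_distrib mult.left_commute)
  then show ?thesis using R2'[of m] by (simp add: algebra_simps)
qed

lemma L2: "(alpha^2 - of_nat (cn m)) * Oz m = alpha * Ez (Suc m) - gamma * (of_nat (cn m) * of_nat (dn m) * Ez (m-1) + of_nat (en m) * alpha * Oz (m-1))"
proof -
  have a: "alpha * Oz m = Ez (Suc m) + of_nat (cn m) * Ez m - of_nat (en m) * gamma * Oz (m-1)"
    using R2'[of m] by simp
  have "alpha^2 * Oz m = alpha * Ez (Suc m) + of_nat (cn m) * (alpha * Ez m) - of_nat (en m) * gamma * alpha * Oz (m-1)"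
    unfolding power2_eq_square mult.assoc a by (simp add: algebra_simps)
  then show ?thesis using R1'[of m] by (simp add: algebra_simps)
qed

lemma idE: "(alpha^2 - of_nat (cn m)) * (a * Ez m + b * alpha * Oz m) - (a + alpha^2 * b) * Ez (Suc m)
  = - gamma * ((of_nat (en m) * (a + alpha^2 * b)) * Oz (m-1)
               + (of_nat (dn m) * (a + of_nat (cn m) * b)) * alpha * Ez (m-1))"
proof -
  have "(alpha^2 - of_nat (cn m)) * (a * Ez m + b * alpha * Oz m)
     = a * ((alpha^2 - of_nat (cn m)) * Ez m) + b * alpha * ((alpha^2 - of_nat (cn m)) * Oz m)"
    by (simp add: algebra_simps)
  also have "\<dots> = a * (Ez (Suc m) - gamma * (of_nat (en m) * Oz (m-1) + of_nat (dn m) * alpha * Ez (m-1)))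
     + b * alpha * (alpha * Ez (Suc m) - gamma * (of_nat (cn m) * of_nat (dn m) * Ez (m-1) + of_nat (en m) * alpha * Oz (m-1)))"
    unfolding L1 L2 ..
  finally show ?thesis by (simp add: algebra_simps power2_eq_square)
qed

lemma idO: "(alpha^2 - of_nat (cn m)) * (A * Oz m + B * alpha * Ez m) - alpha * (A + B) * Ez (Suc m)
  = - gamma * ((of_nat (dn m) * (of_nat (cn m) * A + alpha^2 * B)) * Ez (m-1)
               + (of_nat (en m) * (A + B)) * alpha * Oz (m-1))"
proof -
  have "(alpha^2 - of_nat (cn m)) * (A * Oz m + B * alpha * Ez m)
     = A * ((alpha^2 - of_nat (cn m)) * Oz m) + B * alpha * ((alpha^2 - of_nat (cn m)) * Ez m)"
    by (simp add: algebra_simps)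
  also have "\<dots> = A * (alpha * Ez (Suc m) - gamma * (of_nat (cn m) * of_nat (dn m) * Ez (m-1) + of_nat (en m) * alpha * Oz (m-1)))
     + B * alpha * (Ez (Suc m) - gamma * (of_nat (en m) * Oz (m-1) + of_nat (dn m) * alpha * Ez (m-1)))"
    unfolding L1 L2 ..
  finally show ?thesis by (simp add: algebra_simps power2_eq_square)
qed

lemma cst_add: "[:p:] + [:r:] = [:p + r:]" by simp
lemma alpha2_cst: "alpha^2 * [:b:] = [:X^2 * b:]" by (simp add: alpha_const power2_eq_square)
lemma nat_cst: "(of_nat n :: cpoly2) * [:p:] = [:of_nat n * p:]" by (simp add: of_nat_poly)
lemma nat_cst': "(of_nat n :: cpoly2) = [:of_nat n:]" by (simp add: of_nat_poly)

lemma eq_rearr: "x - y = - z \<Longrightarrow> x = y - (z::'a::ab_group_add)"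
  by (simp add: algebra_simps)

lemma S1E:
  assumes "[:q:] * ([:a:] * Ez m + [:b:] * alpha * Oz m) \<in> Jm (2 * Suc m)" "NZ (a + X^2 * b)"
  shows "(X^2 - of_nat (cn m)) dvd q"
proof -
  have cx: "coeff ([:q:] * ([:a:] * Ez m + [:b:] * alpha * Oz m)) 0 = (q * (a + X^2 * b)) * ep m"
    by (simp add: coeff_mult_0 alpha_const coeff_Oz0 ep_def algebra_simps power2_eq_square)
  have "ep (Suc m) dvd coeff ([:q:] * ([:a:] * Ez m + [:b:] * alpha * Oz m)) 0"
    by (rule N_coeff0_dvd[OF assms(1)])
  then have "(X^2 - of_nat (cn m)) * ep m dvd (q * (a + X^2 * b)) * ep m"
    by (simp only: ep_Suc cx)
  then have "(X^2 - of_nat (cn m)) dvd q * (a + X^2 * b)"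
    using ep_nz[of m] dvd_times_right_cancel_iff by blast
  then show ?thesis using quad_dvd[OF assms(2)] by blast
qed

lemma S1O:
  assumes "[:q:] * ([:A:] * Oz m + [:B:] * alpha * Ez m) \<in> Jm (2 * Suc m)" "NZ (A + B)"
  shows "(X^2 - of_nat (cn m)) dvd q"
proof -
  have cx: "coeff ([:q:] * ([:A:] * Oz m + [:B:] * alpha * Ez m)) 0 = (q * (X * (A + B))) * ep m"
    by (simp add: coeff_mult_0 alpha_const coeff_Oz0 ep_def algebra_simps)
  have "ep (Suc m) dvd coeff ([:q:] * ([:A:] * Oz m + [:B:] * alpha * Ez m)) 0"
    by (rule N_coeff0_dvd[OF assms(1)])
  then have "(X^2 - of_nat (cn m)) * ep m dvd (q * (X * (A + B))) * ep m"
    by (simp only: ep_Suc cx)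
  then have "(X^2 - of_nat (cn m)) dvd q * (X * (A + B))"
    using ep_nz[of m] dvd_times_right_cancel_iff by blast
  moreover have "NZ (X * (A + B))" using assms(2) NZ_X NZ_mult by blast
  ultimately show ?thesis using quad_dvd by blast
qed

lemma S2E:
  assumes "[:(X^2 - of_nat (cn m)) * q':] * ([:a:] * Ez m + [:b:] * alpha * Oz m) \<in> Jm (2 * Suc m)"
  shows "[:q':] * ([:of_nat (en m) * (a + X^2 * b):] * Oz (m-1)
            + [:of_nat (dn m) * (a + of_nat (cn m) * b):] * alpha * Ez (m-1)) \<in> Jm (2*m)"
proof -
  define W where "W = [:of_nat (en m) * (a + X^2 * b):] * Oz (m-1)
            + [:of_nat (dn m) * (a + of_nat (cn m) * b):] * alpha * Ez (m-1)"
  define Y where "Y = [:a:] * Ez m + [:b:] * alpha * Oz m"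
  define R where "R = ([:a:] + alpha^2 * [:b:]) * Ez (Suc m)"
  have W: "W = (of_nat (en m) * ([:a:] + alpha^2 * [:b:])) * Oz (m-1)
               + (of_nat (dn m) * ([:a:] + of_nat (cn m) * [:b:])) * alpha * Ez (m-1)"
    unfolding W_def alpha2_cst nat_cst cst_add by simp
  have c: "[:(X^2 - of_nat (cn m)) * q':] = (alpha^2 - of_nat (cn m)) * [:q':]"
    by (simp add: alpha_const power2_eq_square of_nat_poly algebra_simps)
  have e1: "(alpha^2 - of_nat (cn m)) * Y = R - gamma * W"
    unfolding Y_def R_def W by (rule eq_rearr) (simp only: idE mult_minus_left)
  have "[:(X^2 - of_nat (cn m)) * q':] * Y = [:q':] * ((alpha^2 - of_nat (cn m)) * Y)"
    unfolding c by (simp only: mult_ac)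
  also have "\<dots> = [:q':] * R - gamma * ([:q':] * W)"
    unfolding e1 by (simp only: right_diff_distrib mult.left_commute)
  finally have eq: "[:(X^2 - of_nat (cn m)) * q':] * Y = [:q':] * R - gamma * ([:q':] * W)" .
  have "[:q':] * R \<in> Jm (2 * Suc m)"
    unfolding R_def using Jm_even_gens(1)[of "Suc m"] by (simp only: Jm_mult mult.assoc[symmetric])
  moreover have "[:q':] * R - gamma * ([:q':] * W) \<in> Jm (2 * Suc m)"
    using assms unfolding Y_def[symmetric] eq .
  ultimately have "[:q':] * R - ([:q':] * R - gamma * ([:q':] * W)) \<in> Jm (2 * Suc m)"
    by (rule Jm_diff)
  then have "gamma * ([:q':] * W) \<in> Jm (2 * Suc m)" by simp
  then show ?thesis using N_colon W_def by blast
qed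

lemma S2O:
  assumes "[:(X^2 - of_nat (cn m)) * q':] * ([:A:] * Oz m + [:B:] * alpha * Ez m) \<in> Jm (2 * Suc m)"
  shows "[:q':] * ([:of_nat (dn m) * (of_nat (cn m) * A + X^2 * B):] * Ez (m-1)
            + [:of_nat (en m) * (A + B):] * alpha * Oz (m-1)) \<in> Jm (2*m)"
proof -
  define W where "W = [:of_nat (dn m) * (of_nat (cn m) * A + X^2 * B):] * Ez (m-1)
            + [:of_nat (en m) * (A + B):] * alpha * Oz (m-1)"
  define Y where "Y = [:A:] * Oz m + [:B:] * alpha * Ez m"
  define R where "R = alpha * ([:A:] + [:B:]) * Ez (Suc m)"
  have W: "W = (of_nat (dn m) * (of_nat (cn m) * [:A:] + alpha^2 * [:B:])) * Ez (m-1)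
               + (of_nat (en m) * ([:A:] + [:B:])) * alpha * Oz (m-1)"
    unfolding W_def alpha2_cst nat_cst cst_add by simp
  have c: "[:(X^2 - of_nat (cn m)) * q':] = (alpha^2 - of_nat (cn m)) * [:q':]"
    by (simp add: alpha_const power2_eq_square of_nat_poly algebra_simps)
  have e1: "(alpha^2 - of_nat (cn m)) * Y = R - gamma * W"
    unfolding Y_def R_def W by (rule eq_rearr) (simp only: idO mult_minus_left)
  have "[:(X^2 - of_nat (cn m)) * q':] * Y = [:q':] * ((alpha^2 - of_nat (cn m)) * Y)"
    unfolding c by (simp only: mult_ac)
  also have "\<dots> = [:q':] * R - gamma * ([:q':] * W)"
    unfolding e1 by (simp only: right_diff_distrib mult.left_commute)
  finally have eq: "[:(X^2 - of_nat (cn m)) * q':] * Y = [:q':] * R - gamma * ([:q':] * W)" .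
  have "[:q':] * R \<in> Jm (2 * Suc m)"
    unfolding R_def using Jm_even_gens(1)[of "Suc m"] by (simp only: Jm_mult mult.assoc[symmetric])
  moreover have "[:q':] * R - gamma * ([:q':] * W) \<in> Jm (2 * Suc m)"
    using assms unfolding Y_def[symmetric] eq .
  ultimately have "[:q':] * R - ([:q':] * R - gamma * ([:q':] * W)) \<in> Jm (2 * Suc m)"
    by (rule Jm_diff)
  then have "gamma * ([:q':] * W) \<in> Jm (2 * Suc m)" by simp
  then show ?thesis using N_colon W_def by blast
qed

lemma en_pos: "en (Suc k) \<noteq> 0" by (simp add: en_def)
lemma dn_pos: "dn (Suc k) \<noteq> 0" by (simp add: dn_def)

lemma ep1: "ep (Suc 0) = X^2 - of_nat (cn 0)" by (simp add: ep_Suc ep_0)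

lemma LemEO:
  "(\<forall>q a b. PosP a \<and> PosP b \<and> NZ (a + X^2 * b) \<and>
      [:q:] * ([:a:] * Ez m + [:b:] * alpha * Oz m) \<in> Jm (2 * Suc m) \<longrightarrow> ep (Suc m) dvd q)
   \<and> (\<forall>q A B. PosP A \<and> PosP B \<and> NZ (A + B) \<and>
      [:q:] * ([:A:] * Oz m + [:B:] * alpha * Ez m) \<in> Jm (2 * Suc m) \<longrightarrow> ep (Suc m) dvd q)"
proof (induction m)
  case 0
  show ?case
  proof (intro conjI allI impI)
    fix q a b assume h: "PosP a \<and> PosP b \<and> NZ (a + X\<^sup>2 * b) \<and>
      [:q:] * ([:a:] * Ez 0 + [:b:] * alpha * Oz 0) \<in> Jm (2 * Suc 0)"
    then show "ep (Suc 0) dvd q" using S1E[of q a 0 b] by (simp add: ep1)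
  next
    fix q A B assume h: "PosP A \<and> PosP B \<and> NZ (A + B) \<and>
      [:q:] * ([:A:] * Oz 0 + [:B:] * alpha * Ez 0) \<in> Jm (2 * Suc 0)"
    then show "ep (Suc 0) dvd q" using S1O[of q A 0 B] by (simp add: ep1)
  qed
next
  case (Suc k)
  let ?m = "Suc k"
  show ?case
  proof (intro conjI allI impI)
    fix q a b assume h: "PosP a \<and> PosP b \<and> NZ (a + X\<^sup>2 * b) \<and>
      [:q:] * ([:a:] * Ez ?m + [:b:] * alpha * Oz ?m) \<in> Jm (2 * Suc ?m)"
    then obtain q' where q': "q = (X^2 - of_nat (cn ?m)) * q'" using S1E[of q a ?m b] by (auto elim: dvdE)
    define A where "A = of_nat (en ?m) * (a + X^2 * b)"
    define B where "B = of_nat (dn ?m) * (a + of_nat (cn ?m) * b)"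
    have "[:q':] * ([:A:] * Oz k + [:B:] * alpha * Ez k) \<in> Jm (2 * Suc k)"
      using S2E[of ?m q' a b] h q' unfolding A_def B_def by simp
    moreover have "PosP A" "PosP B" unfolding A_def B_def using h
      by (auto intro!: PosP_mult PosP_add PosP_nat PosP_X2)
    moreover have "NZ (A + B)"
    proof (rule NZ_add)
      show "NZ A" unfolding A_def using h en_pos by (auto intro!: NZ_mult NZ_nat)
    qed fact+
    ultimately have "ep (Suc k) dvd q'" using Suc.IH by blast
    then show "ep (Suc ?m) dvd q" unfolding q' ep_Suc[of ?m] by simp
  next
    fix q A B assume h: "PosP A \<and> PosP B \<and> NZ (A + B) \<and>
      [:q:] * ([:A:] * Oz ?m + [:B:] * alpha * Ez ?m) \<in> Jm (2 * Suc ?m)"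
    then obtain q' where q': "q = (X^2 - of_nat (cn ?m)) * q'" using S1O[of q A ?m B] by (auto elim: dvdE)
    define a where "a = of_nat (dn ?m) * (of_nat (cn ?m) * A + X^2 * B)"
    define b where "b = of_nat (en ?m) * (A + B)"
    have "[:q':] * ([:a:] * Ez k + [:b:] * alpha * Oz k) \<in> Jm (2 * Suc k)"
      using S2O[of ?m q' A B] h q' unfolding a_def b_def by simp
    moreover have "PosP a" "PosP b" unfolding a_def b_def using h
      by (auto intro!: PosP_mult PosP_add PosP_nat PosP_X2)
    moreover have "NZ (a + X^2 * b)"
    proof (rule NZ_add2)
      show "NZ (X^2 * b)" unfolding b_def using h en_pos by (auto intro!: NZ_mult NZ_nat NZ_X2)
      show "PosP (X^2 * b)" using \<open>PosP b\<close> by (auto intro!: PosP_mult PosP_X2)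
    qed fact
    ultimately have "ep (Suc k) dvd q'" using Suc.IH by blast
    then show "ep (Suc ?m) dvd q" unfolding q' ep_Suc[of ?m] by simp
  qed
qed

lemma KeyO:
  assumes "degree p < 2 * Suc n" "[:p:] * Oz n \<in> Jm (2 * Suc n)"
  shows "p = 0"
proof -
  have "[:p:] * ([:1:] * Oz n + [:0:] * alpha * Ez n) \<in> Jm (2 * Suc n)" using assms(2) by simp
  moreover have "PosP 1" "PosP 0" "NZ (1 + 0)" by (simp_all add: PosP_1 PosP_0 NZ_1)
  ultimately have "ep (Suc n) dvd p" using LemEO[of n] by blast
  then show "p = 0" using assms(1) ep_nz[of "Suc n"] dvd_imp_degree_le by fastforce
qed

definition mono :: "nat \<Rightarrow> nat \<Rightarrow> cpoly2" where "mono i j = monom (monom 1 i) j"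
definition StdS :: "nat \<Rightarrow> (nat \<times> nat) set" where "StdS k = {(i,j). j < k \<and> i < 2*(k-j)}"

lemma coeff_mono: "coeff (coeff (mono i j) j') i' = (if i' = i \<and> j' = j then 1 else 0)"
  by (simp add: mono_def coeff_monom)

lemma mono_inj: "mono i j = mono i' j' \<longleftrightarrow> i = i' \<and> j = j'"
proof
  assume "mono i j = mono i' j'"
  then have "coeff (coeff (mono i j) j) i = coeff (coeff (mono i' j') j) i" by simp
  then show "i = i' \<and> j = j'" by (simp add: coeff_mono split: if_splits)
qed simp

lemma mono_ne0: "mono i j \<noteq> 0"
  using coeff_mono[of i j j i] by auto

lemma StdS_finite: "finite (StdS k)"
proof -
  have "StdS k \<subseteq> {..<2*k} \<times> {..<k}" by (auto simp: StdS_def)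
  then show ?thesis by (rule finite_subset) auto
qed

lemma StdS_Suc: "StdS (Suc k) = (\<lambda>(i,j). (i, Suc j)) ` StdS k \<union> (\<lambda>i. (i, 0)) ` {..<2*Suc k}"
proof (rule set_eqI)
  fix x :: "nat \<times> nat"
  obtain i j where x: "x = (i,j)" by fastforce
  show "x \<in> StdS (Suc k) \<longleftrightarrow> x \<in> (\<lambda>(i,j). (i, Suc j)) ` StdS k \<union> (\<lambda>i. (i, 0)) ` {..<2*Suc k}"
  proof (cases j)
    case 0 then show ?thesis by (auto simp: x StdS_def)
  next
    case (Suc j')
    have "x \<in> (\<lambda>(i,j). (i, Suc j)) ` StdS k \<longleftrightarrow> (i, j') \<in> StdS k"
      by (auto simp: x Suc)
    then show ?thesis by (auto simp: x Suc StdS_def)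
  qed
qed

lemma card_StdS: "card (StdS k) = k * (k + 1)"
proof (induction k)
  case 0 then show ?case by (simp add: StdS_def)
next
  case (Suc k)
  have d: "(\<lambda>(i,j). (i, Suc j)) ` StdS k \<inter> (\<lambda>i. (i, 0)) ` {..<2*Suc k} = {}" by auto
  have i1: "inj_on (\<lambda>(i,j). (i, Suc j)) (StdS k)" by (auto simp: inj_on_def)
  have i2: "inj_on (\<lambda>i. (i, 0::nat)) {..<2*Suc k}" by (auto simp: inj_on_def)
  have "card (StdS (Suc k)) = card ((\<lambda>(i,j). (i, Suc j)) ` StdS k) + card ((\<lambda>i. (i, 0::nat)) ` {..<2*Suc k})"
    unfolding StdS_Suc by (rule card_Un_disjoint) (use d StdS_finite in auto)
  also have "\<dots> = card (StdS k) + 2 * Suc k" using card_image[OF i1] card_image[OF i2] by simp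
  finally show ?case using Suc by simp
qed

lemma std_coeff_zero:
  assumes "std k s" "(i, j) \<notin> StdS k"
  shows "coeff (coeff s j) i = 0"
proof (cases "j < k")
  case True
  then have "2*(k-j) \<le> i" using assms(2) by (auto simp: StdS_def)
  moreover have "degree (coeff s j) < 2*(k-j)" using assms(1) True by (simp add: std_def)
  ultimately show ?thesis by (simp add: coeff_eq_0)
next
  case False then show ?thesis using assms(1) by (simp add: std_def)
qed

lemma coeff_comb:
  "coeff (coeff (\<Sum>(i,j)\<in>StdS k. smult [:c i j:] (mono i j)) j') i' = (if (i', j') \<in> StdS k then c i' j' else 0)"
proof -
  have "coeff (coeff (\<Sum>(i,j)\<in>StdS k. smult [:c i j:] (mono i j)) j') i'
     = (\<Sum>x\<in>StdS k. (if x = (i', j') then c i' j' else 0))"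
    unfolding coeff_sum
  proof (rule sum.cong[OF refl])
    fix x assume "x \<in> StdS k"
    obtain a b where x: "x = (a, b)" by fastforce
    show "coeff (coeff (case x of (i, j) \<Rightarrow> smult [:c i j:] (mono i j)) j') i' = (if x = (i', j') then c i' j' else 0)"
      unfolding x by (cases "i' = a \<and> j' = b") (auto simp: coeff_mono)
  qed
  also have "\<dots> = (if (i', j') \<in> StdS k then c i' j' else 0)"
    using StdS_finite by (simp add: sum.delta')
  finally show ?thesis .
qed

lemma std_comb: "std k (\<Sum>(i,j)\<in>StdS k. smult [:c i j:] (mono i j))"
proof -
  let ?s = "\<Sum>(i,j)\<in>StdS k. smult [:c i j:] (mono i j)"
  have "coeff ?s j = 0" if "k \<le> j" for j
  proof (rule poly_eqI)
    fix n show "coeff (coeff ?s j) n = coeff 0 n" using that by (simp add: coeff_comb) (simp add: StdS_def)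
  qed
  moreover have "degree (coeff ?s j) < 2*(k-j)" if "j < k" for j
  proof -
    have "degree (coeff ?s j) \<le> 2*(k-j) - 1"
    proof (rule degree_le, intro allI impI)
      fix i assume "2 * (k - j) - 1 < i"
      have "coeff (coeff ?s j) i = (if (i, j) \<in> StdS k then c i j else 0)" by (rule coeff_comb)
      also have "\<dots> = 0" using \<open>2 * (k - j) - 1 < i\<close> by (auto simp: StdS_def)
      finally show "coeff (coeff ?s j) i = 0" .
    qed
    then show ?thesis using that by simp
  qed
  ultimately show ?thesis by (simp add: std_def)
qed

lemma std_expand: "std k s \<Longrightarrow> s = (\<Sum>(i,j)\<in>StdS k. smult [:coeff (coeff s j) i:] (mono i j))"
  by (auto simp: poly_eq_iff coeff_comb std_coeff_zero)

interpretation V: vector_space "\<lambda>(c::complex) (p::cpoly2). smult [:c:] p"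
proof (unfold_locales)
  fix a b :: complex and x y :: cpoly2
  show "smult [:a:] (x + y) = smult [:a:] x + smult [:a:] y" by (rule smult_add_right)
  have e: "[:a + b:] = [:a:] + [:b:]" by simp
  show "smult [:a + b:] x = smult [:a:] x + smult [:b:] x" unfolding e by (rule smult_add_left)
  show "smult [:a:] (smult [:b:] x) = smult [:a * b:] x" by (simp add: mult.commute)
  show "smult [:1:] x = x" by (simp add: one_pCons[symmetric])
qed

lemma Jm_sub: "zeta g \<in> Jm h \<Longrightarrow> zeta (Suc g) \<in> Jm h \<Longrightarrow> zeta (Suc (Suc g)) \<in> Jm h \<Longrightarrow> x \<in> Jm g \<Longrightarrow> x \<in> Jm h"
proof -
  assume a: "zeta g \<in> Jm h" "zeta (Suc g) \<in> Jm h" "zeta (Suc (Suc g)) \<in> Jm h" "x \<in> Jm g"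
  then obtain a b c where "x = a * zeta g + b * zeta (g+1) + c * zeta (g+2)" unfolding Jm_iff by blast
  then show ?thesis using a by (simp add: Jm_add Jm_mult)
qed

lemma JmSub1: "x \<in> Jm (2*Suc n) \<Longrightarrow> x \<in> Jm (2*n+1)"
proof (rule Jm_sub)
  have z: "zeta (2*Suc n) = Ez (Suc n)" "zeta (Suc (2*Suc n)) = Oz (Suc n)" "zeta (Suc (Suc (2*Suc n))) = Ez (Suc (Suc n))"
     "zeta (2*n+1) = Oz n" "zeta (Suc (2*n+1)) = Ez (Suc n)" "zeta (Suc (Suc (2*n+1))) = Oz (Suc n)"
    by (simp_all add: Ez_def Oz_def)
  have g: "Oz n \<in> Jm (2*n+1)" "Ez (Suc n) \<in> Jm (2*n+1)" "Oz (Suc n) \<in> Jm (2*n+1)"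
    using Jm_g0[of "2*n+1"] Jm_g1[of "2*n+1"] Jm_g2[of "2*n+1"] z by simp_all
  show "zeta (2*Suc n) \<in> Jm (2*n+1)" "zeta (Suc (2*Suc n)) \<in> Jm (2*n+1)" using g z by simp_all
  have "Ez (Suc (Suc n)) = alpha * Oz (Suc n) - of_nat (cn (Suc n)) * Ez (Suc n) + of_nat (en (Suc n)) * gamma * Oz n"
    using R2'[of "Suc n"] by simp
  then show "zeta (Suc (Suc (2*Suc n))) \<in> Jm (2*n+1)" using g z
    by (simp only: Jm_add Jm_diff Jm_mult mult.assoc)
qed

lemma JmSub2: "x \<in> Jm (2*n+1) \<Longrightarrow> x \<in> Jm (2*n)"
proof (rule Jm_sub)
  have z: "zeta (2*n+1) = Oz n" "zeta (Suc (2*n+1)) = Ez (Suc n)" "zeta (Suc (Suc (2*n+1))) = Oz (Suc n)"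
    by (simp_all add: Ez_def Oz_def)
  show "zeta (2*n+1) \<in> Jm (2*n)" "zeta (Suc (2*n+1)) \<in> Jm (2*n)" using z Jm_even_gens[of n] by simp_all
  have "Oz (Suc n) = alpha * Ez (Suc n) + of_nat (dn (Suc n)) * gamma * Ez n" using R1'[of "Suc n"] by simp
  then show "zeta (Suc (Suc (2*n+1))) \<in> Jm (2*n)" using z Jm_even_gens[of n]
    by (simp only: Jm_add Jm_mult mult.assoc)
qed

lemma Jm_smult: "x \<in> Jm g \<Longrightarrow> smult c x \<in> Jm g"
  using Jm_mult[of x g "[:c:]"] by simp

lemma std_mono: "(i, j) \<in> StdS k \<Longrightarrow> std k (mono i j)"
  by (auto simp: std_def StdS_def mono_def coeff_monom degree_monom_eq)

lemma const_sum: "[:sum f A:] = (\<Sum>x\<in>A. [:f x:])"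
  by (induction A rule: infinite_finite_induct) (simp_all add: cst_add[symmetric])

lemma X_pow: "X^i = monom 1 i"
  by (simp add: monom_altdef)

lemma std_in_span: "std k s \<Longrightarrow> s \<in> V.span ((\<lambda>(i,j). mono i j) ` StdS k)"
proof -
  assume "std k s"
  then have e: "s = (\<Sum>(i,j)\<in>StdS k. smult [:coeff (coeff s j) i:] (mono i j))" by (rule std_expand)
  have "(\<Sum>(i,j)\<in>StdS k. smult [:coeff (coeff s j) i:] (mono i j)) \<in> V.span ((\<lambda>(i,j). mono i j) ` StdS k)"
  proof (rule V.span_sum)
    fix x assume x: "x \<in> StdS k"
    obtain a b where ab: "x = (a, b)" by fastforce
    have "mono a b \<in> V.span ((\<lambda>(i,j). mono i j) ` StdS k)" by (rule V.span_base) (use x ab in auto)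
    then show "(case x of (i, j) \<Rightarrow> smult [:coeff (coeff s j) i:] (mono i j)) \<in> V.span ((\<lambda>(i,j). mono i j) ` StdS k)"
      unfolding ab by (simp add: V.span_scale)
  qed
  then show ?thesis using e by simp
qed

lemma StdS_mono: "StdS n \<subseteq> StdS (Suc n)"
  by (auto simp: StdS_def)

lemma X_pow_inj: "X^i = X^j \<Longrightarrow> i = j"
proof -
  assume "X^i = X^j"
  then have "degree (X^i) = degree (X^j)" by simp
  then show ?thesis by (simp add: X_pow degree_monom_eq)
qed

lemma odd_span: "\<exists>s. std n s \<and> p - s \<in> Jm (2*n+1)"
proof -
  let ?m = "\<lambda>(i,j). mono i j"
  define S where "S = ?m ` StdS (Suc n)"
  define B1 where "B1 = ?m ` StdS n"
  have "\<forall>i. \<exists>v. std (Suc n) v \<and> [:X^i:] * Oz n - v \<in> Jm (2*Suc n)" using N_span by blast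
  then obtain vv where vv1: "\<And>i. std (Suc n) (vv i)" and vv2: "\<And>i. [:X^i:] * Oz n - vv i \<in> Jm (2*Suc n)"
    by metis
  define B2 where "B2 = vv ` {..<2*Suc n}"
  have JJ: "x \<in> Jm (2*Suc n) \<Longrightarrow> x \<in> Jm (2*n)" for x using JmSub1 JmSub2 by blast
  have Oz_in: "Oz n \<in> Jm (2*n)" by (rule Jm_even_gens(2))
  have injm: "inj_on ?m A" for A by (auto simp: inj_on_def mono_inj)
  have inj_vv: "inj_on vv {..<2*Suc n}"
  proof (rule inj_onI)
    fix i j assume ij: "i \<in> {..<2*Suc n}" "j \<in> {..<2*Suc n}" "vv i = vv j"
    have "[:X^i - X^j:] * Oz n = [:X^i:] * Oz n - [:X^j:] * Oz n" by (simp add: smult_diff_left)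
    then have "[:X^i - X^j:] * Oz n = ([:X^i:] * Oz n - vv i) - ([:X^j:] * Oz n - vv j)"
      using ij(3) by simp
    then have "[:X^i - X^j:] * Oz n \<in> Jm (2*Suc n)" using vv2 by (simp add: Jm_diff)
    moreover have "degree (X^i - X^j) < 2*Suc n"
      using ij(1,2) degree_diff_le[of "X^i" "max i j" "X^j"] by (simp add: X_pow degree_monom_eq)
    ultimately have "X^i - X^j = 0" using KeyO by blast
    then show "i = j" using X_pow_inj by simp
  qed
  have disj: "B1 \<inter> B2 = {}"
  proof (rule ccontr)
    assume "B1 \<inter> B2 \<noteq> {}"
    then obtain i j i' where ij: "(i,j) \<in> StdS n" "i' < 2*Suc n" "mono i j = vv i'"
      unfolding B1_def B2_def by auto
    have "mono i j = [:X^i':] * Oz n - ([:X^i':] * Oz n - vv i')" using ij(3) by simp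
    moreover have "[:X^i':] * Oz n \<in> Jm (2*n)" using Oz_in by (rule Jm_mult)
    moreover have "[:X^i':] * Oz n - vv i' \<in> Jm (2*n)" using JJ vv2 by blast
    ultimately have "mono i j \<in> Jm (2*n)" by (metis Jm_diff)
    then have "mono i j = 0" using N_indep std_mono[OF ij(1)] by blast
    then show False using mono_ne0 by simp
  qed
  have finS: "finite S" "finite B1" "finite B2" using StdS_finite by (auto simp: S_def B1_def B2_def)
  have cB1: "card B1 = n * (n+1)" unfolding B1_def using card_image[OF injm] card_StdS by simp
  have cB2: "card B2 = 2 * Suc n" unfolding B2_def using card_image[OF inj_vv] by simp
  have cS: "card S = Suc n * (Suc n + 1)" unfolding S_def using card_image[OF injm] card_StdS by simp
  have cB: "card (B1 \<union> B2) = card S"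
    using card_Un_disjoint[OF finS(2,3) disj] cB1 cB2 cS by (simp add: algebra_simps)
  have sub: "B1 \<union> B2 \<subseteq> V.span S"
  proof
    fix x assume "x \<in> B1 \<union> B2"
    then show "x \<in> V.span S"
    proof
      assume "x \<in> B1" then have "x \<in> S" using StdS_mono unfolding B1_def S_def by auto
      then show ?thesis by (rule V.span_base)
    next
      assume "x \<in> B2" then obtain i where "x = vv i" unfolding B2_def by auto
      then show ?thesis using std_in_span[OF vv1[of i]] unfolding S_def by simp
    qed
  qed
  have indep: "V.independent (B1 \<union> B2)"
  proof
    assume "V.dependent (B1 \<union> B2)"
    then obtain u where u: "\<exists>v\<in>B1 \<union> B2. u v \<noteq> 0" "(\<Sum>v\<in>B1 \<union> B2. smult [:u v:] v) = 0"
      using V.dependent_finite[of "B1 \<union> B2"] finS by auto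
    define s1 where "s1 = (\<Sum>v\<in>B1. smult [:u v:] v)"
    define s2 where "s2 = (\<Sum>v\<in>B2. smult [:u v:] v)"
    have s12: "s1 + s2 = 0" using u(2) sum.union_disjoint[OF finS(2,3) disj, of "\<lambda>v. smult [:u v:] v"] by (simp add: s1_def s2_def)
    have s1e: "s1 = (\<Sum>(i,j)\<in>StdS n. smult [:u (mono i j):] (mono i j))"
      unfolding s1_def B1_def by (subst sum.reindex[OF injm]) (simp add: case_prod_beta')
    have s2e: "s2 = (\<Sum>i<2*Suc n. smult [:u (vv i):] (vv i))"
      unfolding s2_def B2_def by (subst sum.reindex[OF inj_vv]) simp
    define P where "P = (\<Sum>i<2*Suc n. monom (u (vv i)) i)"
    have t1: "smult [:u (vv i):] ([:X^i:] * Oz n - vv i) = [:monom (u (vv i)) i:] * Oz n - smult [:u (vv i):] (vv i)" for i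
      by (simp add: smult_diff_right X_pow smult_monom)
    have "(\<Sum>i<2*Suc n. smult [:u (vv i):] ([:X^i:] * Oz n - vv i))
        = (\<Sum>i<2*Suc n. [:monom (u (vv i)) i:] * Oz n) - s2"
      unfolding t1 s2e by (rule sum_subtractf)
    also have "(\<Sum>i<2*Suc n. [:monom (u (vv i)) i:] * Oz n) = [:P:] * Oz n"
      unfolding P_def const_sum by (rule sum_distrib_right[symmetric])
    finally have D: "[:P:] * Oz n - s2 = (\<Sum>i<2*Suc n. smult [:u (vv i):] ([:X^i:] * Oz n - vv i))" by simp
    have Din: "[:P:] * Oz n - s2 \<in> Jm (2*Suc n)"
      unfolding D by (rule Jm_sum) (rule Jm_smult[OF vv2])
    have "s1 = ([:P:] * Oz n - s2) - [:P:] * Oz n" using s12 by (simp add: algebra_simps eq_neg_iff_add_eq_0)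
    moreover have "[:P:] * Oz n \<in> Jm (2*n)" using Oz_in by (rule Jm_mult)
    ultimately have "s1 \<in> Jm (2*n)" using JJ[OF Din] by (metis Jm_diff)
    moreover have "std n s1" unfolding s1e by (rule std_comb)
    ultimately have "s1 = 0" by (rule N_indep)
    then have u1: "\<forall>v\<in>B1. u v = 0"
    proof -
      have "u (mono i j) = 0" if "(i,j) \<in> StdS n" for i j
        using arg_cong[OF \<open>s1 = 0\<close>, of "\<lambda>x. coeff (coeff x j) i"] that
        unfolding s1e by (simp add: coeff_comb)
      then show ?thesis unfolding B1_def by auto
    qed
    have "s2 = 0" using s12 \<open>s1 = 0\<close> by simp
    then have "[:P:] * Oz n \<in> Jm (2*Suc n)" using Din by simp
    moreover have cP: "coeff P k = (if k < 2*Suc n then u (vv k) else 0)" for k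
      by (simp add: P_def coeff_sum coeff_monom)
    moreover have "degree P < 2*Suc n"
    proof -
      have "degree P \<le> 2*Suc n - 1" by (rule degree_le) (simp add: cP)
      then show ?thesis by simp
    qed
    ultimately have "P = 0" using KeyO by blast
    have u2: "\<forall>v\<in>B2. u v = 0"
    proof -
      have "u (vv i) = 0" if "i < 2*Suc n" for i using cP[of i] that \<open>P = 0\<close> by simp
      then show ?thesis unfolding B2_def by auto
    qed
    show False using u(1) u1 u2 by auto
  qed
  have spanS: "V.span S \<subseteq> V.span (B1 \<union> B2)"
  proof
    fix a assume aS: "a \<in> V.span S"
    show "a \<in> V.span (B1 \<union> B2)"
    proof (rule ccontr)
      assume na: "a \<notin> V.span (B1 \<union> B2)"
      then have "a \<notin> B1 \<union> B2" using V.span_base by blast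
      have ind: "V.independent (insert a (B1 \<union> B2))" by (rule V.independent_insertI[OF na indep])
      have "insert a (B1 \<union> B2) \<subseteq> V.span S" using aS sub by blast
      then have "card (insert a (B1 \<union> B2)) \<le> card S"
        using V.independent_span_bound[OF finS(1) ind] by blast
      moreover have "card (insert a (B1 \<union> B2)) = card S + 1"
        using \<open>a \<notin> B1 \<union> B2\<close> finS cB by simp
      ultimately show False by simp
    qed
  qed
  obtain t where t: "std (Suc n) t" "p - t \<in> Jm (2*Suc n)" using N_span by blast
  have "t \<in> V.span (B1 \<union> B2)" using std_in_span[OF t(1)] spanS unfolding S_def by auto
  then obtain u where tu: "t = (\<Sum>v\<in>B1 \<union> B2. smult [:u v:] v)"
    using V.span_finite[of "B1 \<union> B2"] finS by auto
  define s where "s = (\<Sum>v\<in>B1. smult [:u v:] v)"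
  have "t - s = (\<Sum>v\<in>B2. smult [:u v:] v)"
    unfolding tu s_def using sum.union_disjoint[OF finS(2,3) disj, of "\<lambda>v. smult [:u v:] v"] by simp
  moreover have "(\<Sum>v\<in>B2. smult [:u v:] v) \<in> Jm (2*n+1)"
  proof (rule Jm_sum)
    fix v assume "v \<in> B2"
    then obtain i where v: "v = vv i" unfolding B2_def by auto
    have e: "vv i = [:X^i:] * Oz n - ([:X^i:] * Oz n - vv i)" by simp
    have "Oz n \<in> Jm (2*n+1)" using Jm_g0[of "2*n+1"] by (simp add: Oz_def)
    then have "[:X^i:] * Oz n \<in> Jm (2*n+1)" by (rule Jm_mult)
    then have "[:X^i:] * Oz n - ([:X^i:] * Oz n - vv i) \<in> Jm (2*n+1)"
      using JmSub1[OF vv2[of i]] by (rule Jm_diff)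
    then have "vv i \<in> Jm (2*n+1)" using e by simp
    then show "smult [:u v:] v \<in> Jm (2*n+1)" using v by (simp add: Jm_smult)
  qed
  ultimately have ts: "t - s \<in> Jm (2*n+1)" by simp
  have "p - s = (p - t) + (t - s)" by simp
  then have "p - s \<in> Jm (2*n+1)" using Jm_add[OF JmSub1[OF t(2)] ts] by simp
  moreover have "std n s"
  proof -
    have "s = (\<Sum>(i,j)\<in>StdS n. smult [:u (mono i j):] (mono i j))"
      unfolding s_def B1_def by (subst sum.reindex[OF injm]) (simp add: case_prod_beta')
    then show ?thesis by (simp add: std_comb)
  qed
  ultimately show ?thesis by blast
qed

definition sigA :: "complex poly \<Rightarrow> complex poly" where "sigA q = pcompose q [:0, -1:]"
definition sig :: "cpoly2 \<Rightarrow> cpoly2" where "sig P = map_poly sigA (pcompose P [:0, -1:])"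

lemma sigA_0: "sigA 0 = 0" by (simp add: sigA_def)
lemma sigA_add: "sigA (p + q) = sigA p + sigA q" by (simp add: sigA_def pcompose_add)
lemma sigA_mult: "sigA (p * q) = sigA p * sigA q" by (simp add: sigA_def pcompose_mult)
lemma coeff_sigA: "coeff (sigA q) i = (-1)^i * coeff q i" by (simp add: sigA_def coeff_pcompose_linear)

lemma hom_sum:
  assumes "\<And>x y. f (x + y) = f x + f y" "f 0 = 0"
  shows "f (sum g A) = (\<Sum>a\<in>A. f (g a))"
  by (induction A rule: infinite_finite_induct) (simp_all add: assms)

lemma map_poly_hom_add:
  assumes "\<And>x y. f (x + y) = f x + f y" "f 0 = 0"
  shows "map_poly f (p + q) = map_poly f p + map_poly f q"
  by (rule poly_eqI) (simp add: coeff_map_poly assms)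

lemma map_poly_hom_mult:
  assumes "\<And>x y. f (x + y) = f x + f y" "\<And>x y. f (x * y) = f x * f y" "f 0 = 0"
  shows "map_poly f (p * q) = map_poly f p * map_poly f q"
proof (rule poly_eqI)
  fix n
  have "coeff (map_poly f (p * q)) n = f (\<Sum>i\<le>n. coeff p i * coeff q (n-i))"
    by (simp add: coeff_map_poly assms(3) coeff_mult)
  also have "\<dots> = (\<Sum>i\<le>n. f (coeff p i) * f (coeff q (n-i)))"
    by (simp add: hom_sum[of f, OF assms(1,3)] assms(2))
  also have "\<dots> = coeff (map_poly f p * map_poly f q) n"
    by (simp add: coeff_map_poly assms(3) coeff_mult)
  finally show "coeff (map_poly f (p * q)) n = coeff (map_poly f p * map_poly f q) n" .
qed

lemma sig_add: "sig (p + q) = sig p + sig q"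
  by (simp add: sig_def pcompose_add map_poly_hom_add sigA_add sigA_0)
lemma sig_mult: "sig (p * q) = sig p * sig q"
  by (simp add: sig_def pcompose_mult map_poly_hom_mult sigA_add sigA_mult sigA_0)
lemma neg1_pow_poly: "((-1)::'a::comm_ring_1 poly)^j = [:(-1)^j:]"
  by (induction j) simp_all

lemma coeff_sig: "coeff (coeff (sig P) j) i = (-1)^(i+j) * coeff (coeff P j) i"
proof -
  have "coeff (sig P) j = sigA ((-1)^j * coeff P j)"
    by (simp add: sig_def coeff_map_poly sigA_0 coeff_pcompose_linear)
  then show ?thesis by (simp add: coeff_sigA neg1_pow_poly power_add)
qed

lemma sig_0: "sig 0 = 0" by (simp add: sig_def)
lemma sig_uminus: "sig (- p) = - sig p"
  by (rule poly_eqI, rule poly_eqI) (simp add: coeff_sig)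
lemma sig_diff: "sig (p - q) = sig p - sig q"
  using sig_add[of p "-q"] sig_uminus[of q] by simp

lemma sig_const: "sig [:[:c:]:] = [:[:c:]:]"
proof (rule poly_eqI, rule poly_eqI)
  fix j i show "coeff (coeff (sig [:[:c:]:]) j) i = coeff (coeff [:[:c:]:] j) i"
    by (cases j; cases i) (simp_all add: coeff_sig)
qed
lemma sig_nat: "sig (of_nat n) = of_nat n"
  by (simp add: of_nat_cp sig_const)
lemma coeff_alpha: "coeff (coeff alpha j) i = (if j = 0 \<and> i = 1 then 1 else 0)"
  by (cases j; cases i) (simp_all add: alpha_def coeff_pCons split: nat.splits)
lemma coeff_gamma: "coeff (coeff gamma j) i = (if j = 1 \<and> i = 0 then 1 else 0)"
  by (cases j; cases i) (simp_all add: gamma_def coeff_pCons split: nat.splits)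
lemma sig_alpha: "sig alpha = - alpha"
  by (rule poly_eqI, rule poly_eqI) (simp add: coeff_sig coeff_alpha)
lemma sig_gamma: "sig gamma = - gamma"
  by (rule poly_eqI, rule poly_eqI) (simp add: coeff_sig coeff_gamma)
lemma sig_1: "sig 1 = 1"
  using sig_const[of 1] by (simp add: one_pCons)

lemma sig_zeta: "sig (zeta k) = (-1)^k * zeta k"
proof (induction k rule: less_induct)
  case (less k)
  show ?case
  proof (cases k)
    case 0 then show ?thesis by (simp add: sig_1)
  next
    case (Suc m)
    have IH1: "sig (zeta m) = (-1)^m * zeta m" using less Suc by simp
    have IH2: "odd m \<Longrightarrow> sig (zeta (m-1)) = (-1)^Suc m * zeta (m-1)"
    proof -
      assume "odd m"
      then have "m - 1 < k" "(-1::cpoly2)^(m-1) = (-1)^Suc m" using Suc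
        by (auto elim!: oddE simp: power_add)
      then show ?thesis using less by simp
    qed
    have IH3: "2 \<le> m \<Longrightarrow> sig (zeta (m-2)) = (-1)^m * zeta (m-2)"
    proof -
      assume "2 \<le> m"
      then have "m - 2 < k" "(-1::cpoly2)^(m-2) = (-1)^m" using Suc
        by (auto simp: power_diff)
      then show ?thesis using less by simp
    qed
    have z: "zeta (Suc m) = alpha * zeta m
     + (if odd m then - (of_nat (16 * m^2)) * zeta (m - 1) else 0)
     + (if m \<ge> 2 then of_nat (2 * m * (m - 1)) * gamma * zeta (m - 2) else 0)"
      by (simp only: zeta.simps(2))
    have "sig (zeta (Suc m)) = sig alpha * sig (zeta m)
     + (if odd m then - (of_nat (16 * m^2)) * sig (zeta (m - 1)) else 0)
     + (if m \<ge> 2 then of_nat (2 * m * (m - 1)) * sig gamma * sig (zeta (m - 2)) else 0)"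
      unfolding z by (simp only: sig_add sig_mult sig_nat sig_uminus sig_0 if_distrib[of sig])
    also have "\<dots> = (-1)^Suc m * zeta (Suc m)"
      unfolding z using IH1 IH2 IH3 by (cases "odd m"; cases "2 \<le> m") (simp_all add: sig_alpha sig_gamma algebra_simps)
    finally show ?thesis unfolding Suc .
  qed
qed

lemma sig_J: "x \<in> Jm g \<Longrightarrow> sig x \<in> Jm g"
proof -
  assume "x \<in> Jm g"
  then obtain a b c where x: "x = a * zeta g + b * zeta (g+1) + c * zeta (g+2)" unfolding Jm_iff by blast
  have "sig x = (sig a * (-1)^g) * zeta g + (sig b * (-1)^(g+1)) * zeta (g+1) + (sig c * (-1)^(g+2)) * zeta (g+2)"
    unfolding x by (simp add: sig_add sig_mult sig_zeta mult_ac)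
  then show ?thesis unfolding Jm_iff by blast
qed

definition pr :: "nat \<Rightarrow> cpoly2 \<Rightarrow> cpoly2" where
  "pr e P = smult [:1/2:] (P + (-1)^e * sig P)"

lemma coeff_pr: "coeff (coeff (pr e P) j) i = (if even (i + j + e) then coeff (coeff P j) i else 0)"
proof -
  have "coeff (coeff (pr e P) j) i = (1/2) * (coeff (coeff P j) i + (-1)^e * ((-1)^(i+j) * coeff (coeff P j) i))"
    by (simp add: pr_def coeff_sig neg1_pow_poly)
  also have "\<dots> = (1/2) * (coeff (coeff P j) i + (-1)^(i+j+e) * coeff (coeff P j) i)"
    by (simp add: power_add mult_ac)
  also have "\<dots> = (if even (i + j + e) then coeff (coeff P j) i else 0)"
    by (cases "even (i + j + e)") (simp_all add: neg_one_even_power neg_one_odd_power)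
  finally show ?thesis .
qed

lemma pr_J: "x \<in> Jm g \<Longrightarrow> pr e x \<in> Jm g"
proof -
  assume x: "x \<in> Jm g"
  have "(-1)^e * sig x \<in> Jm g" using sig_J[OF x] by (rule Jm_mult)
  then show ?thesis unfolding pr_def using x by (simp add: Jm_add Jm_smult)
qed

lemma pr_diff: "pr e (x - y) = pr e x - pr e y"
  by (simp add: pr_def sig_diff algebra_simps smult_diff_right)

lemma indepG: "x \<in> Jm g \<Longrightarrow> std (g div 2) x \<Longrightarrow> x = 0"
proof -
  assume a: "x \<in> Jm g" "std (g div 2) x"
  show "x = 0"
  proof (cases "even g")
    case True
    then have "g = 2 * (g div 2)" by simp
    then show ?thesis using a N_indep by metis
  next
    case False
    then have g: "g = 2 * (g div 2) + 1" by simp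
    then have "x \<in> Jm (2 * (g div 2))" using a(1) JmSub2 by metis
    then show ?thesis using a(2) N_indep by blast
  qed
qed

lemma spanG: "\<exists>s. std (g div 2) s \<and> p - s \<in> Jm g"
proof (cases "even g")
  case True
  then have "g = 2 * (g div 2)" by simp
  then show ?thesis using N_span by metis
next
  case False
  then have "g = 2 * (g div 2) + 1" by simp
  then show ?thesis using odd_span by metis
qed

definition Tpar :: "nat \<Rightarrow> nat \<Rightarrow> (nat \<times> nat) set" where
  "Tpar e k = {(i,j) \<in> StdS k. even (i + j + e)}"

lemma Tpar_finite: "finite (Tpar e k)"
  by (rule finite_subset[OF _ StdS_finite[of k]]) (auto simp: Tpar_def)

lemma card_evens: "card {i. i < 2 * Suc k \<and> even (i + e)} = Suc k"
proof -
  have "{i. i < 2 * Suc k \<and> even (i + e)} = (\<lambda>t. 2*t + e mod 2) ` {..<Suc k}"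
  proof (rule set_eqI)
    fix i
    show "i \<in> {i. i < 2 * Suc k \<and> even (i + e)} \<longleftrightarrow> i \<in> (\<lambda>t. 2*t + e mod 2) ` {..<Suc k}"
    proof
      assume "i \<in> {i. i < 2 * Suc k \<and> even (i + e)}"
      then have h: "i < 2 * Suc k" "even (i + e)" by auto
      then have "i = 2 * (i div 2) + e mod 2" by presburger
      moreover have "i div 2 < Suc k" using h by auto
      ultimately show "i \<in> (\<lambda>t. 2*t + e mod 2) ` {..<Suc k}" by blast
    next
      assume "i \<in> (\<lambda>t. 2*t + e mod 2) ` {..<Suc k}"
      then obtain t where "t < Suc k" "i = 2*t + e mod 2" by auto
      then show "i \<in> {i. i < 2 * Suc k \<and> even (i + e)}" by auto
    qed
  qed
  moreover have "inj_on (\<lambda>t. 2*t + e mod 2) {..<Suc k}" by (auto simp: inj_on_def)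
  ultimately show ?thesis by (simp add: card_image)
qed

lemma card_Tpar: "2 * card (Tpar e k) = k * (k + 1)"
proof (induction k arbitrary: e)
  case 0 then show ?case by (simp add: Tpar_def StdS_def)
next
  case (Suc k)
  have eq: "Tpar e (Suc k) = (\<lambda>(i,j). (i, Suc j)) ` Tpar (Suc e) k \<union> (\<lambda>i. (i, 0)) ` {i. i < 2 * Suc k \<and> even (i + e)}"
  proof -
    have "Tpar e (Suc k) = {x \<in> (\<lambda>(i,j). (i, Suc j)) ` StdS k \<union> (\<lambda>i. (i, 0)) ` {..<2*Suc k}. even (fst x + snd x + e)}"
      unfolding Tpar_def StdS_Suc by auto
    also have "\<dots> = (\<lambda>(i,j). (i, Suc j)) ` Tpar (Suc e) k \<union> (\<lambda>i. (i, 0)) ` {i. i < 2 * Suc k \<and> even (i + e)}"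
      unfolding Tpar_def by auto
    finally show ?thesis .
  qed
  have d: "(\<lambda>(i,j). (i, Suc j)) ` Tpar (Suc e) k \<inter> (\<lambda>i. (i, 0::nat)) ` {i. i < 2 * Suc k \<and> even (i + e)} = {}" by auto
  have i1: "inj_on (\<lambda>(i,j). (i, Suc j)) (Tpar (Suc e) k)" by (auto simp: inj_on_def)
  have i2: "inj_on (\<lambda>i. (i, 0::nat)) {i. i < 2 * Suc k \<and> even (i + e)}" by (auto simp: inj_on_def)
  have c1: "card ((\<lambda>(i,j). (i, Suc j)) ` Tpar (Suc e) k) = card (Tpar (Suc e) k)" by (rule card_image[OF i1])
  have c2: "card ((\<lambda>i. (i, 0::nat)) ` {i. i < 2 * Suc k \<and> even (i + e)}) = Suc k"
    by (simp only: card_image[OF i2] card_evens)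
  have f1: "finite ((\<lambda>(i,j). (i, Suc j)) ` Tpar (Suc e) k)" using Tpar_finite by simp
  have f2: "finite ((\<lambda>i. (i, 0::nat)) ` {i. i < 2 * Suc k \<and> even (i + e)})" by simp
  have "card (Tpar e (Suc k)) = card (Tpar (Suc e) k) + Suc k"
    unfolding eq card_Un_disjoint[OF f1 f2 d] c1 c2 ..
  then show ?case using Suc.IH[of "Suc e"] by simp
qed

lemma coeff_combT:
  assumes "finite T"
  shows "coeff (coeff (\<Sum>(i,j)\<in>T. smult [:c i j:] (mono i j)) j') i' = (if (i', j') \<in> T then c i' j' else 0)"
proof -
  have "coeff (coeff (\<Sum>(i,j)\<in>T. smult [:c i j:] (mono i j)) j') i'
     = (\<Sum>x\<in>T. (if x = (i', j') then c i' j' else 0))"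
    unfolding coeff_sum
  proof (rule sum.cong[OF refl])
    fix x assume "x \<in> T"
    obtain a b where x: "x = (a, b)" by fastforce
    show "coeff (coeff (case x of (i, j) \<Rightarrow> smult [:c i j:] (mono i j)) j') i' = (if x = (i', j') then c i' j' else 0)"
      unfolding x by (cases "i' = a \<and> j' = b") (auto simp: coeff_mono)
  qed
  also have "\<dots> = (if (i', j') \<in> T then c i' j' else 0)"
    using assms by (simp add: sum.delta')
  finally show ?thesis .
qed

lemma expandT:
  assumes "finite T" "\<And>i j. coeff (coeff x j) i \<noteq> 0 \<Longrightarrow> (i, j) \<in> T"
  shows "x = (\<Sum>(i,j)\<in>T. smult [:coeff (coeff x j) i:] (mono i j))"
proof (rule poly_eqI, rule poly_eqI)
  fix j i
  show "coeff (coeff x j) i = coeff (coeff (\<Sum>(i,j)\<in>T. smult [:coeff (coeff x j) i:] (mono i j)) j) i"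
    unfolding coeff_combT[OF assms(1)] using assms(2) by auto
qed

lemma stdT:
  assumes "T \<subseteq> StdS k"
  shows "std k (\<Sum>(i,j)\<in>T. smult [:c i j:] (mono i j))"
proof -
  have fT: "finite T" using assms StdS_finite finite_subset by blast
  have "(\<Sum>(i,j)\<in>T. smult [:c i j:] (mono i j)) = (\<Sum>(i,j)\<in>StdS k. smult [:(if (i,j) \<in> T then c i j else 0):] (mono i j))"
    by (rule poly_eqI, rule poly_eqI) (use assms in \<open>auto simp: coeff_combT[OF fT] coeff_comb\<close>)
  then show ?thesis by (simp only: std_comb)
qed

lemma mod4_lemma: "(2 * m) mod 4 = 2 * (m mod 2)" for m :: nat
  by presburger

lemma hcomp_odd: "odd r \<Longrightarrow> x \<in> hcomp r \<Longrightarrow> x = 0"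
proof -
  assume a: "odd r" "x \<in> hcomp r"
  have "coeff (coeff x j) i = 0" for i j
  proof (rule ccontr)
    assume "coeff (coeff x j) i \<noteq> 0"
    then have "(2 * (i + j)) mod 4 = r" using a(2) by (auto simp: hcomp_def)
    moreover have "even ((2 * (i + j)) mod 4)" unfolding mod4_lemma by simp
    ultimately show False using a(1) by simp
  qed
  then show ?thesis by (simp add: poly_eq_iff)
qed

lemma hcomp_pr: "r = 0 \<or> r = 2 \<Longrightarrow> x \<in> hcomp r \<Longrightarrow> pr (r div 2) x = x"
proof -
  assume a: "r = 0 \<or> r = 2" "x \<in> hcomp r"
  show ?thesis
  proof (rule poly_eqI, rule poly_eqI)
    fix j i
    show "coeff (coeff (pr (r div 2) x) j) i = coeff (coeff x j) i"
    proof (cases "coeff (coeff x j) i = 0")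
      case False
      then have "(2 * (i + j)) mod 4 = r" using a(2) by (auto simp: hcomp_def)
      then have "even (i + j + r div 2)" using a(1) unfolding mod4_lemma by auto
      then show ?thesis by (simp add: coeff_pr)
    qed (simp add: coeff_pr)
  qed
qed

lemma mono_hcomp: "r = 0 \<or> r = 2 \<Longrightarrow> even (i + j + r div 2) \<Longrightarrow> mono i j \<in> hcomp r"
  unfolding hcomp_def using mod4_lemma[of "i+j"] by (auto simp: coeff_mono)

lemma cconst_mult: "cconst c * p = smult [:c:] p" by (simp add: cconst_def)

theorem corollary5p7:
  fixes g :: nat
  shows "\<forall>r<4. qdim (hcomp r) (Jm g)
           (if r = 0 \<or> r = 2 then (g div 2) * (g div 2 + 1) div 2 else 0)"
proof (intro allI impI)
  fix r :: nat assume "r < 4"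
  define n where "n = g div 2"
  show "qdim (hcomp r) (Jm g) (if r = 0 \<or> r = 2 then (g div 2) * (g div 2 + 1) div 2 else 0)"
  proof (cases "r = 0 \<or> r = 2")
    case False
    then have "odd r" using \<open>r < 4\<close> by presburger
    then have "\<forall>s\<in>hcomp r. s = 0" using hcomp_odd by blast
    then show ?thesis using False unfolding qdim_def by (auto intro!: exI[of _ "\<lambda>_. 0"] simp: Jm_0)
  next
    case True
    define e where "e = r div 2"
    define T where "T = Tpar e n"
    define N where "N = card T"
    have NN: "N = n * (n + 1) div 2" using card_Tpar[of e n] unfolding N_def T_def by simp
    have fT: "finite T" unfolding T_def by (rule Tpar_finite)
    have TS: "T \<subseteq> StdS n" unfolding T_def Tpar_def by auto
    obtain h where h: "bij_betw h {0..<N} T" using ex_bij_betw_nat_finite[OF fT] unfolding N_def by blast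
    define v where "v = (\<lambda>k. case h k of (i, j) \<Rightarrow> mono i j)"
    have reidx: "(\<Sum>k<N. f (h k)) = (\<Sum>t\<in>T. f t)" for f :: "nat \<times> nat \<Rightarrow> cpoly2"
      using sum.reindex_bij_betw[OF h, of f] by (simp add: atLeast0LessThan)
    have hT: "k < N \<Longrightarrow> h k \<in> T" for k using h by (auto simp: bij_betw_def)
    have hinv: "k < N \<Longrightarrow> inv_into {0..<N} h (h k) = k" for k
      using h by (simp add: bij_betw_def inv_into_f_f)
    have "qdim (hcomp r) (Jm g) N"
      unfolding qdim_def
    proof (rule exI[of _ v], intro conjI allI impI ballI)
      fix k assume "k < N"
      then have hk: "h k \<in> T" by (rule hT)
      obtain i j where ij0: "h k = (i, j)" by (cases "h k") auto
      then have ij: "h k = (i, j)" "(i, j) \<in> T" using hk by auto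
      then have "even (i + j + r div 2)" unfolding T_def Tpar_def e_def by auto
      then show "v k \<in> hcomp r" unfolding v_def ij(1) using mono_hcomp[OF True] by simp
    next
      fix c :: "nat \<Rightarrow> complex" and k
      assume y: "(\<Sum>i<N. cconst (c i) * v i) \<in> Jm g" and "k < N"
      define w where "w = (\<lambda>i j. c (inv_into {0..<N} h (i, j)))"
      have ye: "(\<Sum>i<N. cconst (c i) * v i) = (\<Sum>(i,j)\<in>T. smult [:w i j:] (mono i j))"
      proof -
        have "(\<Sum>i<N. cconst (c i) * v i) = (\<Sum>k<N. (\<lambda>t. case t of (i, j) \<Rightarrow> smult [:w i j:] (mono i j)) (h k))"
        proof (rule sum.cong[OF refl])
          fix k assume "k \<in> {..<N}"
          then have "k < N" by simp
          obtain i j where ij: "h k = (i, j)" by fastforce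
          have "w i j = c k" unfolding w_def using hinv[OF \<open>k < N\<close>] ij by simp
          then show "cconst (c k) * v k = (\<lambda>t. case t of (i, j) \<Rightarrow> smult [:w i j:] (mono i j)) (h k)"
            unfolding v_def ij by (simp add: cconst_mult)
        qed
        also have "\<dots> = (\<Sum>(i,j)\<in>T. smult [:w i j:] (mono i j))" by (rule reidx)
        finally show ?thesis .
      qed
      have "std n (\<Sum>i<N. cconst (c i) * v i)" unfolding ye by (rule stdT[OF TS])
      then have "(\<Sum>i<N. cconst (c i) * v i) = 0" using indepG y unfolding n_def by blast
      then have z: "(\<Sum>(i,j)\<in>T. smult [:w i j:] (mono i j)) = 0" using ye by simp
      have hk: "h k \<in> T" using hT[OF \<open>k < N\<close>] .
      obtain i j where ij0: "h k = (i, j)" by (cases "h k") auto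
      then have ij: "h k = (i, j)" "(i, j) \<in> T" using hk by auto
      have "w i j = 0" using arg_cong[OF z, of "\<lambda>x. coeff (coeff x j) i"] ij(2)
        by (simp add: coeff_combT[OF fT])
      then show "c k = 0" unfolding w_def using hinv[OF \<open>k < N\<close>] ij by simp
    next
      fix s assume s: "s \<in> hcomp r"
      obtain t where t: "std n t" "s - t \<in> Jm g" using spanG unfolding n_def by blast
      define t' where "t' = pr e t"
      have "s - t' = pr e (s - t)" unfolding t'_def pr_diff e_def using hcomp_pr[OF True s] by simp
      then have st: "s - t' \<in> Jm g" using pr_J[OF t(2)] by simp
      have supp: "(i, j) \<in> T" if "coeff (coeff t' j) i \<noteq> 0" for i j
      proof -
        have "even (i + j + e)" "coeff (coeff t j) i \<noteq> 0" using that unfolding t'_def coeff_pr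
          by (auto split: if_splits)
        moreover have "(i, j) \<in> StdS n" using std_coeff_zero[OF t(1)] calculation(2) by blast
        ultimately show ?thesis unfolding T_def Tpar_def by simp
      qed
      have te: "t' = (\<Sum>(i,j)\<in>T. smult [:coeff (coeff t' j) i:] (mono i j))"
        by (rule expandT[OF fT supp])
      define c where "c = (\<lambda>k. case h k of (i, j) \<Rightarrow> coeff (coeff t' j) i)"
      have "(\<Sum>k<N. cconst (c k) * v k) = (\<Sum>k<N. (\<lambda>x. case x of (i, j) \<Rightarrow> smult [:coeff (coeff t' j) i:] (mono i j)) (h k))"
        by (rule sum.cong[OF refl]) (auto simp: c_def v_def cconst_mult split: prod.splits)
      also have "\<dots> = t'" unfolding reidx using te by simp
      finally show "\<exists>c. s - (\<Sum>i<N. cconst (c i) * v i) \<in> Jm g" using st by (intro exI[of _ c]) simp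
    qed
    then show ?thesis using True NN n_def by simp
  qed
qed

end
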